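(* Let $\Gamma$ be a metric graph or a tropical curve with a real structure and let $D_1,D_2$ be two linearly equivalent real divisors on $\Gamma$. If $\Gamma'$ is a connected component of $\Gamma(\mathbb R)$, then $\deg(D_1|_{\Gamma'})\equiv\deg(D_2|_{\Gamma'})\pmod 2$, where $\deg(D|_{\Gamma'})=\sum_{p\in\Gamma'}D(p)$.
   Context: A metric graph is a compact connected metric space locally isometric to star-shaped sets $\{te^{2k\pi i/n}:0\le t<r\}\subset\mathbb C$; vertices are points of local valence $\ne2$, edges are the components of the complement of the vertices. A tropical curve is the union of a metric graph and finitely many unbounded edges isometric to $[0,\infty]$, each attached at its point $0$. A real structure is an isometric involution $\iota$; $\overline p=\iota(p)$; $\Gamma(\mathbb R)$ is the set of fixed points of $\iota$. A divisor is a finite formal $\mathbb Z$-combination of points; $\overline D(p)=D(\overline p)$; $D$ is real if $\overline D=D$. A rational function is a continuous $f:\Gamma\to\mathbb R$, piecewise affine with integer slopes and finitely many pieces on each edge; $\Delta(f)(p)$ is the sum of the outgoing slopes of $f$ at $p$; $D_1\sim D_2$ iff $D_2-D_1=\Delta(f)$ for some rational function $f$. *)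

theory Defs
  imports "HOL-Analysis.Analysis"
begin

text \<open>Edges of infinite
  length are the unbounded edges (legs) of a tropical curve: such an edge is
  isometric to [0,\<infinity>], attached at its point 0 (= src e); its point \<infinity> is the
  vertex tgt e, which lies on no other edge.
  A point of the curve is either a vertex or an interior point of an edge e,
  given by its distance t from src e (0 < t < len e).\<close>

datatype ('v, 'e) gpt = Vert 'v | Inner 'e real

definition gpts :: "('e \<Rightarrow> ereal) \<Rightarrow> ('v, 'e) gpt set" where
  "gpts len = range Vert \<union> {Inner e t | e t. 0 < t \<and> ereal t < len e}"

definition edge_pt :: "('e \<Rightarrow> 'v) \<Rightarrow> ('e \<Rightarrow> 'v) \<Rightarrow> ('e \<Rightarrow> ereal) \<Rightarrow> 'e \<Rightarrow> ereal \<Rightarrow> ('v, 'e) gpt" where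
  "edge_pt src tgt len e t =
     (if t \<le> 0 then Vert (src e) else if len e \<le> t then Vert (tgt e)
      else Inner e (real_of_ereal t))"

text \<open>The topology of the curve: the quotient topology of the disjoint union of
  the closed edges [0, len e] (with [0,\<infinity>] topologised as a subspace of the
  extended reals).\<close>
definition gtop :: "('e \<Rightarrow> 'v) \<Rightarrow> ('e \<Rightarrow> 'v) \<Rightarrow> ('e \<Rightarrow> ereal) \<Rightarrow> ('v, 'e) gpt topology" where
  "gtop src tgt len = topology (\<lambda>U. U \<subseteq> gpts len \<and>
     (\<forall>e. openin (top_of_set {0..len e}) {t \<in> {0..len e}. edge_pt src tgt len e t \<in> U}))"

lemma istopology_gtop:
  fixes src tgt :: "'e \<Rightarrow> 'v" and len :: "'e \<Rightarrow> ereal"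
  shows "istopology (\<lambda>U. U \<subseteq> gpts len \<and>
     (\<forall>e. openin (top_of_set {0..len e}) {t \<in> {0..len e}. edge_pt src tgt len e t \<in> U}))"
proof -
  have I: "\<And>S T e. {t \<in> {0..len e}. edge_pt src tgt len e t \<in> S \<inter> T} =
          {t \<in> {0..len e}. edge_pt src tgt len e t \<in> S} \<inter> {t \<in> {0..len e}. edge_pt src tgt len e t \<in> T}"
    by blast
  have U: "\<And>K e. {t \<in> {0..len e}. edge_pt src tgt len e t \<in> \<Union>K} =
          \<Union>((\<lambda>S. {t \<in> {0..len e}. edge_pt src tgt len e t \<in> S}) ` K)" by blast
  show ?thesis unfolding istopology_def
    by (auto simp only: I U intro!: openin_Int openin_Union)
qed

text \<open>Well-formed model: positive lengths; legs end in a point at infinity lying on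
  no other edge; the whole space is connected (compactness is automatic).\<close>
definition metric_graph_model :: "('e::finite \<Rightarrow> 'v::finite) \<Rightarrow> ('e \<Rightarrow> 'v) \<Rightarrow> ('e \<Rightarrow> ereal) \<Rightarrow> bool" where
  "metric_graph_model src tgt len \<longleftrightarrow>
     (\<forall>e. 0 < len e) \<and>
     (\<forall>e. len e = \<infinity> \<longrightarrow> tgt e \<noteq> src e \<and>
          (\<forall>e'. e' \<noteq> e \<longrightarrow> src e' \<noteq> tgt e \<and> tgt e' \<noteq> tgt e)) \<and>
     connected_space (gtop src tgt len)"

text \<open>Real structure: an isometric involution, given as an involutive automorphism
  of the model (vertex involution tau, edge involution sigma, fl e = edge e is
  mapped onto sigma e with reversed orientation).\<close>
definition real_structure :: "('e \<Rightarrow> 'v) \<Rightarrow> ('e \<Rightarrow> 'v) \<Rightarrow> ('e \<Rightarrow> ereal) \<Rightarrow>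
    ('v \<Rightarrow> 'v) \<Rightarrow> ('e \<Rightarrow> 'e) \<Rightarrow> ('e \<Rightarrow> bool) \<Rightarrow> bool" where
  "real_structure src tgt len \<tau> \<sigma> fl \<longleftrightarrow>
     (\<forall>v. \<tau> (\<tau> v) = v) \<and> (\<forall>e. \<sigma> (\<sigma> e) = e) \<and>
     (\<forall>e. len (\<sigma> e) = len e \<and> fl (\<sigma> e) = fl e) \<and>
     (\<forall>e. fl e \<longrightarrow> len e \<noteq> \<infinity>) \<and>
     (\<forall>e. \<not> fl e \<longrightarrow> src (\<sigma> e) = \<tau> (src e) \<and> tgt (\<sigma> e) = \<tau> (tgt e)) \<and>
     (\<forall>e. fl e \<longrightarrow> src (\<sigma> e) = \<tau> (tgt e) \<and> tgt (\<sigma> e) = \<tau> (src e))"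

definition conj_pt :: "('e \<Rightarrow> ereal) \<Rightarrow> ('v \<Rightarrow> 'v) \<Rightarrow> ('e \<Rightarrow> 'e) \<Rightarrow> ('e \<Rightarrow> bool) \<Rightarrow>
    ('v, 'e) gpt \<Rightarrow> ('v, 'e) gpt" where
  "conj_pt len \<tau> \<sigma> fl p = (case p of Vert v \<Rightarrow> Vert (\<tau> v)
     | Inner e t \<Rightarrow> (if fl e then Inner (\<sigma> e) (real_of_ereal (len e) - t) else Inner (\<sigma> e) t))"

definition real_pts :: "('e \<Rightarrow> ereal) \<Rightarrow> ('v \<Rightarrow> 'v) \<Rightarrow> ('e \<Rightarrow> 'e) \<Rightarrow> ('e \<Rightarrow> bool) \<Rightarrow> ('v, 'e) gpt set" where
  "real_pts len \<tau> \<sigma> fl = {p \<in> gpts len. conj_pt len \<tau> \<sigma> fl p = p}"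

definition divisor :: "('e \<Rightarrow> ereal) \<Rightarrow> (('v, 'e) gpt \<Rightarrow> int) \<Rightarrow> bool" where
  "divisor len D \<longleftrightarrow> finite {p. D p \<noteq> 0} \<and> {p. D p \<noteq> 0} \<subseteq> gpts len"

definition real_divisor :: "('e \<Rightarrow> ereal) \<Rightarrow> ('v \<Rightarrow> 'v) \<Rightarrow> ('e \<Rightarrow> 'e) \<Rightarrow> ('e \<Rightarrow> bool) \<Rightarrow>
    (('v, 'e) gpt \<Rightarrow> int) \<Rightarrow> bool" where
  "real_divisor len \<tau> \<sigma> fl D \<longleftrightarrow> (\<forall>p \<in> gpts len. D (conj_pt len \<tau> \<sigma> fl p) = D p)"

definition efun :: "('e \<Rightarrow> 'v) \<Rightarrow> ('e \<Rightarrow> 'v) \<Rightarrow> ('e \<Rightarrow> ereal) \<Rightarrow> (('v, 'e) gpt \<Rightarrow> real) \<Rightarrow> 'e \<Rightarrow> real \<Rightarrow> real" where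
  "efun src tgt len f e t = f (edge_pt src tgt len e (ereal t))"

definition piecewise_int_affine :: "(real \<Rightarrow> real) \<Rightarrow> ereal \<Rightarrow> bool" where
  "piecewise_int_affine g L \<longleftrightarrow>
     (\<exists>(a :: nat \<Rightarrow> real) k. a 0 = 0 \<and> (\<forall>i<k. a i < a (Suc i)) \<and>
        (L \<noteq> \<infinity> \<longrightarrow> ereal (a k) = L) \<and>
        (\<forall>i<k. \<exists>m :: int. \<exists>c. \<forall>t \<in> {a i..a (Suc i)}. g t = of_int m * t + c) \<and>
        (L = \<infinity> \<longrightarrow> (\<exists>m :: int. \<exists>c. \<forall>t \<ge> a k. g t = of_int m * t + c)))"

definition rational_fn :: "('e \<Rightarrow> 'v) \<Rightarrow> ('e \<Rightarrow> 'v) \<Rightarrow> ('e \<Rightarrow> ereal) \<Rightarrow> (('v, 'e) gpt \<Rightarrow> real) \<Rightarrow> bool" where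
  "rational_fn src tgt len f \<longleftrightarrow>
     continuous_map (gtop src tgt len) euclideanreal f \<and>
     (\<forall>e. piecewise_int_affine (efun src tgt len f e) (len e))"

definition rslope :: "(real \<Rightarrow> real) \<Rightarrow> real \<Rightarrow> real" where
  "rslope g t = (THE m. (g has_real_derivative m) (at_right t))"

definition lslope :: "(real \<Rightarrow> real) \<Rightarrow> real \<Rightarrow> real" where
  "lslope g t = (THE m. (g has_real_derivative m) (at_left t))"

text \<open>Delta(f)(p): sum of outgoing slopes at p.  At an interior point of edge e the
  outgoing slopes are the right derivative and minus the left derivative; at a
  vertex, each edge end contributes its outgoing slope (a loop contributes twice).
  At the point at infinity of a leg the (eventually constant) f has slope 0.\<close>
definition lap :: "('e::finite \<Rightarrow> 'v) \<Rightarrow> ('e \<Rightarrow> 'v) \<Rightarrow> ('e \<Rightarrow> ereal) \<Rightarrow> (('v, 'e) gpt \<Rightarrow> real) \<Rightarrow>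
    ('v, 'e) gpt \<Rightarrow> real" where
  "lap src tgt len f p = (case p of
      Inner e t \<Rightarrow> rslope (efun src tgt len f e) t - lslope (efun src tgt len f e) t
    | Vert v \<Rightarrow> (\<Sum>e | src e = v. rslope (efun src tgt len f e) 0)
              + (\<Sum>e | tgt e = v \<and> len e \<noteq> \<infinity>.
                    - lslope (efun src tgt len f e) (real_of_ereal (len e))))"

definition lin_equiv :: "('e::finite \<Rightarrow> 'v) \<Rightarrow> ('e \<Rightarrow> 'v) \<Rightarrow> ('e \<Rightarrow> ereal) \<Rightarrow>
    (('v, 'e) gpt \<Rightarrow> int) \<Rightarrow> (('v, 'e) gpt \<Rightarrow> int) \<Rightarrow> bool" where
  "lin_equiv src tgt len D1 D2 \<longleftrightarrow>
     (\<exists>f. rational_fn src tgt len f \<and>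
          (\<forall>p \<in> gpts len. real_of_int (D2 p - D1 p) = lap src tgt len f p))"

definition deg_on :: "(('v, 'e) gpt \<Rightarrow> int) \<Rightarrow> ('v, 'e) gpt set \<Rightarrow> int" where
  "deg_on D S = (\<Sum>p \<in> {p \<in> S. D p \<noteq> 0}. D p)"

end

theory Submission
  imports Defs
begin


definition pw_good :: "(real \<Rightarrow> real) \<Rightarrow> bool" where
  "pw_good g \<longleftrightarrow>
    (\<forall>t. \<exists>m::int. \<exists>c \<delta>. \<delta> > 0 \<and> (\<forall>s\<in>{t..t+\<delta>}. g s = of_int m * s + c)) \<and>
    (\<forall>t. \<exists>m::int. \<exists>c \<delta>. \<delta> > 0 \<and> (\<forall>s\<in>{t-\<delta>..t}. g s = of_int m * s + c))"

lemma rs_deriv_iff: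
  assumes "\<delta> > 0" "\<forall>s\<in>{t..t+\<delta>}. g s = m * s + c"
  shows "(g has_real_derivative m') (at_right t) \<longleftrightarrow> m' = m"
proof -
  have ev: "eventually (\<lambda>y. (g y - g t) / (y - t) = m) (at_right t)"
  proof -
    have "eventually (\<lambda>y. y \<in> {t<..<t+\<delta>}) (at_right t)"
      using assms(1) by (intro eventually_at_right_real) simp
    then show ?thesis
    proof (rule eventually_mono)
      fix y assume y: "y \<in> {t<..<t+\<delta>}"
      then have "g y = m*y + c" "g t = m*t+c" using assms(1,2) by auto
      then show "(g y - g t) / (y - t) = m" using y by (simp add: field_simps)
    qed
  qed
  have lim: "((\<lambda>y. (g y - g t) / (y - t)) \<longlongrightarrow> m) (at_right t)"
    using ev by (rule tendsto_eventually)
  show ?thesis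
  proof
    assume "(g has_real_derivative m') (at_right t)"
    then have "((\<lambda>y. (g y - g t) / (y - t)) \<longlongrightarrow> m') (at_right t)"
      by (simp add: has_field_derivative_iff)
    then show "m' = m" using lim tendsto_unique trivial_limit_at_right_real by blast
  next
    assume "m' = m" then show "(g has_real_derivative m') (at_right t)"
      using lim by (simp add: has_field_derivative_iff)
  qed
qed

lemma ls_deriv_iff:
  assumes "\<delta> > 0" "\<forall>s\<in>{t-\<delta>..t}. g s = m * s + c"
  shows "(g has_real_derivative m') (at_left t) \<longleftrightarrow> m' = m"
proof -
  have ev: "eventually (\<lambda>y. (g y - g t) / (y - t) = m) (at_left t)"
  proof -
    have "eventually (\<lambda>y. y \<in> {t-\<delta><..<t}) (at_left t)"
      using assms(1) by (intro eventually_at_left_real) simp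
    then show ?thesis
    proof (rule eventually_mono)
      fix y assume y: "y \<in> {t-\<delta><..<t}"
      then have "g y = m*y + c" "g t = m*t+c" using assms(1,2) by auto
      then show "(g y - g t) / (y - t) = m" using y by (simp add: field_simps)
    qed
  qed
  have lim: "((\<lambda>y. (g y - g t) / (y - t)) \<longlongrightarrow> m) (at_left t)"
    using ev by (rule tendsto_eventually)
  show ?thesis
  proof
    assume "(g has_real_derivative m') (at_left t)"
    then have "((\<lambda>y. (g y - g t) / (y - t)) \<longlongrightarrow> m') (at_left t)"
      by (simp add: has_field_derivative_iff)
    then show "m' = m" using lim tendsto_unique trivial_limit_at_left_real by blast
  next
    assume "m' = m" then show "(g has_real_derivative m') (at_left t)"
      using lim by (simp add: has_field_derivative_iff)
  qed
qed

lemma rslope_aff: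
  assumes "\<delta> > 0" "\<forall>s\<in>{t..t+\<delta>}. g s = m * s + c"
  shows "rslope g t = m"
  unfolding rslope_def using rs_deriv_iff[OF assms] by simp

lemma lslope_aff:
  assumes "\<delta> > 0" "\<forall>s\<in>{t-\<delta>..t}. g s = m * s + c"
  shows "lslope g t = m"
  unfolding lslope_def using ls_deriv_iff[OF assms] by simp

lemma good_rgerm:
  assumes "pw_good g"
  shows "rslope g t \<in> \<int> \<and> (\<exists>c \<delta>. \<delta> > 0 \<and> (\<forall>s\<in>{t..t+\<delta>}. g s = rslope g t * s + c))"
proof -
  obtain m :: int and c \<delta> where "\<delta> > 0" "\<forall>s\<in>{t..t+\<delta>}. g s = of_int m * s + c"
    using assms unfolding pw_good_def by blast
  moreover from this have "rslope g t = of_int m" by (rule rslope_aff)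
  ultimately show ?thesis by auto
qed

lemma good_lgerm:
  assumes "pw_good g"
  shows "lslope g t \<in> \<int> \<and> (\<exists>c \<delta>. \<delta> > 0 \<and> (\<forall>s\<in>{t-\<delta>..t}. g s = lslope g t * s + c))"
proof -
  obtain m :: int and c \<delta> where "\<delta> > 0" "\<forall>s\<in>{t-\<delta>..t}. g s = of_int m * s + c"
    using assms unfolding pw_good_def by blast
  moreover from this have "lslope g t = of_int m" by (rule lslope_aff)
  ultimately show ?thesis by auto
qed

lemma good_diff:
  assumes "pw_good g1" "pw_good g2"
  shows "pw_good (\<lambda>s. g1 s - g2 s)"
  unfolding pw_good_def
proof (intro conjI allI)
  fix t
  obtain m1::int and c1 d1 where 1: "d1 > 0" "\<forall>s\<in>{t..t+d1}. g1 s = of_int m1 * s + c1"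
    using assms(1) unfolding pw_good_def by blast
  obtain m2::int and c2 d2 where 2: "d2 > 0" "\<forall>s\<in>{t..t+d2}. g2 s = of_int m2 * s + c2"
    using assms(2) unfolding pw_good_def by blast
  show "\<exists>m::int. \<exists>c \<delta>. \<delta> > 0 \<and> (\<forall>s\<in>{t..t+\<delta>}. g1 s - g2 s = of_int m * s + c)"
    using 1 2 by (intro exI[of _ "m1-m2"] exI[of _ "c1-c2"] exI[of _ "min d1 d2"]) (auto simp: algebra_simps)
next
  fix t
  obtain m1::int and c1 d1 where 1: "d1 > 0" "\<forall>s\<in>{t-d1..t}. g1 s = of_int m1 * s + c1"
    using assms(1) unfolding pw_good_def by blast
  obtain m2::int and c2 d2 where 2: "d2 > 0" "\<forall>s\<in>{t-d2..t}. g2 s = of_int m2 * s + c2"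
    using assms(2) unfolding pw_good_def by blast
  show "\<exists>m::int. \<exists>c \<delta>. \<delta> > 0 \<and> (\<forall>s\<in>{t-\<delta>..t}. g1 s - g2 s = of_int m * s + c)"
    using 1 2 by (intro exI[of _ "m1-m2"] exI[of _ "c1-c2"] exI[of _ "min d1 d2"]) (auto simp: algebra_simps)
qed

lemma good_refl:
  assumes "pw_good g"
  shows "pw_good (\<lambda>s. g (L - s))"
  unfolding pw_good_def
proof (intro conjI allI)
  fix t
  obtain m::int and c d where 1: "d > 0" "\<forall>s\<in>{(L-t)-d..L-t}. g s = of_int m * s + c"
    using assms(1) unfolding pw_good_def by blast
  show "\<exists>m::int. \<exists>c \<delta>. \<delta> > 0 \<and> (\<forall>s\<in>{t..t+\<delta>}. g (L - s) = of_int m * s + c)"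
    using 1 by (intro exI[of _ "-m"] exI[of _ "of_int m * L + c"] exI[of _ d]) (auto simp: algebra_simps)
next
  fix t
  obtain m::int and c d where 1: "d > 0" "\<forall>s\<in>{L-t..(L-t)+d}. g s = of_int m * s + c"
    using assms(1) unfolding pw_good_def by blast
  show "\<exists>m::int. \<exists>c \<delta>. \<delta> > 0 \<and> (\<forall>s\<in>{t-\<delta>..t}. g (L - s) = of_int m * s + c)"
    using 1 by (intro exI[of _ "-m"] exI[of _ "of_int m * L + c"] exI[of _ d]) (auto simp: algebra_simps)
qed

lemma rslope_diff:
  assumes "pw_good g1" "pw_good g2"
  shows "rslope (\<lambda>s. g1 s - g2 s) t = rslope g1 t - rslope g2 t"
proof -
  obtain c1 d1 where 1: "d1 > 0" "\<forall>s\<in>{t..t+d1}. g1 s = rslope g1 t * s + c1"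
    using good_rgerm[OF assms(1)] by blast
  obtain c2 d2 where 2: "d2 > 0" "\<forall>s\<in>{t..t+d2}. g2 s = rslope g2 t * s + c2"
    using good_rgerm[OF assms(2)] by blast
  show ?thesis
    by (rule rslope_aff[where \<delta>="min d1 d2" and c="c1 - c2"]) (use 1 2 in \<open>auto simp: algebra_simps\<close>)
qed

lemma lslope_diff:
  assumes "pw_good g1" "pw_good g2"
  shows "lslope (\<lambda>s. g1 s - g2 s) t = lslope g1 t - lslope g2 t"
proof -
  obtain c1 d1 where 1: "d1 > 0" "\<forall>s\<in>{t-d1..t}. g1 s = lslope g1 t * s + c1"
    using good_lgerm[OF assms(1)] by blast
  obtain c2 d2 where 2: "d2 > 0" "\<forall>s\<in>{t-d2..t}. g2 s = lslope g2 t * s + c2"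
    using good_lgerm[OF assms(2)] by blast
  show ?thesis
    by (rule lslope_aff[where \<delta>="min d1 d2" and c="c1 - c2"]) (use 1 2 in \<open>auto simp: algebra_simps\<close>)
qed

lemma rslope_refl:
  assumes "pw_good g"
  shows "rslope (\<lambda>s. g (L - s)) t = - lslope g (L - t)"
proof -
  obtain c d where 1: "d > 0" "\<forall>s\<in>{(L-t)-d..L-t}. g s = lslope g (L-t) * s + c"
    using good_lgerm[OF assms(1)] by blast
  show ?thesis
    by (rule rslope_aff[where \<delta>=d and c="lslope g (L-t) * L + c"]) (use 1 in \<open>auto simp: algebra_simps\<close>)
qed

lemma lslope_refl:
  assumes "pw_good g"
  shows "lslope (\<lambda>s. g (L - s)) t = - rslope g (L - t)"
proof -
  obtain c d where 1: "d > 0" "\<forall>s\<in>{L-t..(L-t)+d}. g s = rslope g (L-t) * s + c"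
    using good_rgerm[OF assms(1)] by blast
  show ?thesis
    by (rule lslope_aff[where \<delta>=d and c="rslope g (L-t) * L + c"]) (use 1 in \<open>auto simp: algebra_simps\<close>)
qed



lemma openin_gtop:
  "openin (gtop src tgt len) U \<longleftrightarrow> U \<subseteq> gpts len \<and>
     (\<forall>e. openin (top_of_set {0..len e}) {t \<in> {0..len e}. edge_pt src tgt len e t \<in> U})"
  unfolding gtop_def by (simp only: topology_inverse'[OF istopology_gtop])

lemma ep_in: "edge_pt src tgt len e t \<in> gpts len"
proof -
  consider "t \<le> 0" | "\<not> t \<le> 0" "len e \<le> t" | "\<not> t \<le> 0" "\<not> len e \<le> t" by blast
  then show ?thesis
  proof cases
    case 3
    then have "t \<noteq> \<infinity>" "t \<noteq> -\<infinity>" by auto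
    then obtain r where r: "t = ereal r" by (cases t) auto
    then have "0 < r" "ereal r < len e" using 3 by auto
    then show ?thesis using 3 r unfolding edge_pt_def gpts_def by auto
  qed (auto simp: edge_pt_def gpts_def)
qed

lemma topspace_gtop: "topspace (gtop src tgt len) = gpts len"
proof
  show "topspace (gtop src tgt len) \<subseteq> gpts len"
    unfolding topspace_def using openin_gtop by blast
  have "{t \<in> {0..len e}. edge_pt src tgt len e t \<in> gpts len} = {0..len e}" for e
    by (auto simp: ep_in)
  then have "openin (gtop src tgt len) (gpts len)"
    unfolding openin_gtop by (simp del: atLeastAtMost_iff)
  then show "gpts len \<subseteq> topspace (gtop src tgt len)"
    by (simp add: openin_subset)
qed

lemma ep_cont: "continuous_map (top_of_set {0..len e}) (gtop src tgt len) (edge_pt src tgt len e)"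
  unfolding continuous_map_def topspace_gtop
  using ep_in by (auto simp: openin_gtop)

lemma efun_le0: "s \<le> 0 \<Longrightarrow> efun src tgt len h e s = h (Vert (src e))"
  by (simp add: efun_def edge_pt_def)

lemma efun_geL: "0 < s \<Longrightarrow> len e \<le> ereal s \<Longrightarrow> efun src tgt len h e s = h (Vert (tgt e))"
  by (simp add: efun_def edge_pt_def)

lemma efun_inner: "0 < s \<Longrightarrow> ereal s < len e \<Longrightarrow> efun src tgt len h e s = h (Inner e s)"
  by (auto simp: efun_def edge_pt_def)

lemma efun_0: "efun src tgt len h e 0 = h (Vert (src e))"
  by (simp add: efun_le0)

lemma find_piece_r:
  fixes a :: "nat \<Rightarrow> real"
  shows "(\<forall>i<k. a i < a (Suc i)) \<Longrightarrow> a 0 \<le> t \<Longrightarrow> t < a k \<Longrightarrow> \<exists>i<k. a i \<le> t \<and> t < a (Suc i)"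
proof (induction k)
  case 0 then show ?case by simp
next
  case (Suc k)
  show ?case
  proof (cases "t < a k")
    case True then show ?thesis using Suc by (metis less_SucI)
  next
    case False then show ?thesis using Suc by auto
  qed
qed

lemma find_piece_l:
  fixes a :: "nat \<Rightarrow> real"
  shows "(\<forall>i<k. a i < a (Suc i)) \<Longrightarrow> a 0 < t \<Longrightarrow> t \<le> a k \<Longrightarrow> \<exists>i<k. a i < t \<and> t \<le> a (Suc i)"
proof (induction k)
  case 0 then show ?case by simp
next
  case (Suc k)
  show ?case
  proof (cases "t \<le> a k")
    case True then show ?thesis using Suc by (metis less_SucI)
  next
    case False then show ?thesis using Suc by auto
  qed
qed


lemma rational_good:
  assumes pos: "0 < len e" and pw: "piecewise_int_affine (efun src tgt len f e) (len e)"
  shows "pw_good (efun src tgt len f e)"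
proof -
  define g where "g = efun src tgt len f e"
  obtain a :: "nat \<Rightarrow> real" and k where a0: "a 0 = 0" and mono: "\<forall>i<k. a i < a (Suc i)"
    and fin: "len e \<noteq> \<infinity> \<longrightarrow> ereal (a k) = len e"
    and pc: "\<forall>i<k. \<exists>m :: int. \<exists>c. \<forall>t \<in> {a i..a (Suc i)}. g t = of_int m * t + c"
    and tl: "len e = \<infinity> \<longrightarrow> (\<exists>m :: int. \<exists>c. \<forall>t \<ge> a k. g t = of_int m * t + c)"
    using pw unfolding piecewise_int_affine_def g_def by blast
  have le0: "\<And>s. s \<le> 0 \<Longrightarrow> g s = f (Vert (src e))" unfolding g_def by (rule efun_le0)
  have geL: "\<And>s. len e \<noteq> \<infinity> \<Longrightarrow> a k \<le> s \<Longrightarrow> g s = f (Vert (tgt e))"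
  proof -
    fix s assume "len e \<noteq> \<infinity>" "a k \<le> s"
    from fin have ak: "ereal (a k) = len e" using \<open>len e \<noteq> \<infinity>\<close> by simp
    then have "len e \<le> ereal s" using \<open>a k \<le> s\<close> by (metis ereal_less_eq(3))
    have "0 < ereal (a k)" using ak pos by simp
    then have "0 < s" using \<open>a k \<le> s\<close> by simp
    note \<open>len e \<le> ereal s\<close> \<open>0 < s\<close>
    then show "g s = f (Vert (tgt e))" unfolding g_def by (rule efun_geL[rotated])
  qed
  have R: "\<exists>m::int. \<exists>c \<delta>. \<delta> > 0 \<and> (\<forall>s\<in>{t..t+\<delta>}. g s = of_int m * s + c)" for t
  proof -
    consider "t < 0" | "0 \<le> t" "t < a k" | "a k \<le> t" "len e \<noteq> \<infinity>" | "a k \<le> t" "len e = \<infinity>"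
      by linarith
    then show ?thesis
    proof cases
      case 1 then show ?thesis
        by (intro exI[of _ 0] exI[of _ "f (Vert (src e))"] exI[of _ "-t"]) (auto simp: le0)
    next
      case 2
      then obtain i where i: "i < k" "a i \<le> t" "t < a (Suc i)" using find_piece_r[OF mono] a0 by force
      then obtain m :: int and c where "\<forall>s \<in> {a i..a (Suc i)}. g s = of_int m * s + c" using pc by blast
      then show ?thesis using i
        by (intro exI[of _ m] exI[of _ c] exI[of _ "a (Suc i) - t"]) auto
    next
      case 3 then show ?thesis
        by (intro exI[of _ 0] exI[of _ "f (Vert (tgt e))"] exI[of _ 1]) (auto simp: geL)
    next
      case 4
      then obtain m :: int and c where "\<forall>s \<ge> a k. g s = of_int m * s + c" using tl by blast
      then show ?thesis using 4
        by (intro exI[of _ m] exI[of _ c] exI[of _ 1]) auto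
    qed
  qed
  have Lf: "\<exists>m::int. \<exists>c \<delta>. \<delta> > 0 \<and> (\<forall>s\<in>{t-\<delta>..t}. g s = of_int m * s + c)" for t
  proof -
    consider "t \<le> 0" | "0 < t" "t \<le> a k" | "a k < t" "len e \<noteq> \<infinity>" | "a k < t" "len e = \<infinity>"
      by linarith
    then show ?thesis
    proof cases
      case 1 then show ?thesis
        by (intro exI[of _ 0] exI[of _ "f (Vert (src e))"] exI[of _ 1]) (auto simp: le0)
    next
      case 2
      then obtain i where i: "i < k" "a i < t" "t \<le> a (Suc i)" using find_piece_l[OF mono] a0 by force
      then obtain m :: int and c where "\<forall>s \<in> {a i..a (Suc i)}. g s = of_int m * s + c" using pc by blast
      then show ?thesis using i
        by (intro exI[of _ m] exI[of _ c] exI[of _ "t - a i"]) auto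
    next
      case 3 then show ?thesis
        by (intro exI[of _ 0] exI[of _ "f (Vert (tgt e))"] exI[of _ "t - a k"]) (auto simp: geL)
    next
      case 4
      then obtain m :: int and c where "\<forall>s \<ge> a k. g s = of_int m * s + c" using tl by blast
      then show ?thesis using 4
        by (intro exI[of _ m] exI[of _ c] exI[of _ "t - a k"]) auto
    qed
  qed
  show ?thesis using R Lf unfolding pw_good_def g_def by blast
qed


lemma rational_tail:
  assumes rf: "rational_fn src tgt len f" and inf: "len e = \<infinity>"
  shows "\<exists>a. \<forall>s\<ge>a. efun src tgt len f e s = f (Vert (tgt e))"
proof -
  define g where "g = efun src tgt len f e"
  have pw: "piecewise_int_affine g (len e)" using rf unfolding rational_fn_def g_def by blast
  obtain a :: "nat \<Rightarrow> real" and k where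
    "len e = \<infinity> \<longrightarrow> (\<exists>m :: int. \<exists>c. \<forall>t \<ge> a k. g t = of_int m * t + c)"
    using pw unfolding piecewise_int_affine_def by blast
  then obtain m :: int and c where tl: "\<forall>t \<ge> a k. g t = of_int m * t + c"
    using inf by blast
  have cm: "continuous_map (top_of_set {0..len e}) euclideanreal (f \<circ> edge_pt src tgt len e)"
  proof (rule continuous_map_compose[OF ep_cont])
    show "continuous_map (gtop src tgt len) euclideanreal f"
      using rf unfolding rational_fn_def by (rule conjunct1)
  qed
  then have co: "continuous_on {0..\<infinity>} (f \<circ> edge_pt src tgt len e)"
    using cm unfolding inf by (simp only: continuous_map_iff_continuous)
  define x where "x n = ereal (\<bar>a k\<bar> + real n)" for n
  have xl: "x \<longlonglongrightarrow> \<infinity>"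
    unfolding tendsto_PInfty
  proof
    fix r
    obtain N :: nat where "r < real N" using reals_Archimedean2 by blast
    then show "eventually (\<lambda>n. ereal r < x n) sequentially"
      unfolding eventually_sequentially x_def by (intro exI[of _ N]) auto
  qed
  have "(\<lambda>n. (f \<circ> edge_pt src tgt len e) (x n)) \<longlonglongrightarrow> (f \<circ> edge_pt src tgt len e) \<infinity>"
  proof (rule continuous_on_tendsto_compose[OF co xl])
    show "\<infinity> \<in> {0..\<infinity>::ereal}" by simp
    show "\<forall>\<^sub>F n in sequentially. x n \<in> {0..\<infinity>}"
      by (rule always_eventually) (simp add: x_def)
  qed
  moreover have "(f \<circ> edge_pt src tgt len e) \<infinity> = f (Vert (tgt e))"
    using inf by (simp add: edge_pt_def)
  moreover have "(f \<circ> edge_pt src tgt len e) (x n) = of_int m * (\<bar>a k\<bar> + real n) + c" for n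
    using tl unfolding g_def efun_def x_def by simp
  ultimately have lim: "(\<lambda>n. of_int m * (\<bar>a k\<bar> + real n) + c) \<longlonglongrightarrow> f (Vert (tgt e))" by simp
  have "(\<lambda>n. (of_int m * (\<bar>a k\<bar> + real (Suc n)) + c) - (of_int m * (\<bar>a k\<bar> + real n) + c))
          \<longlonglongrightarrow> f (Vert (tgt e)) - f (Vert (tgt e))"
    using tendsto_diff[OF lim[THEN LIMSEQ_Suc] lim] by simp
  then have "(\<lambda>n. real_of_int m) \<longlonglongrightarrow> 0" by (simp add: algebra_simps)
  then have m0: "real_of_int m = 0" by (simp add: LIMSEQ_const_iff)
  then have "(\<lambda>n. c) \<longlonglongrightarrow> f (Vert (tgt e))" using lim by simp
  then have "c = f (Vert (tgt e))" by (simp add: LIMSEQ_const_iff)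
  then show ?thesis using tl m0 unfolding g_def by auto
qed



lemma sum_filter_UNIV:
  fixes x :: "'e::finite \<Rightarrow> real"
  shows "(\<Sum>e | P e. x e) = (\<Sum>e\<in>UNIV. if P e then x e else 0)"
  by (simp add: sum.If_cases)

lemma sum_invol:
  fixes G :: "'e::finite \<Rightarrow> real"
  assumes "\<forall>e. \<sigma> (\<sigma> e) = e"
  shows "(\<Sum>e\<in>UNIV. G e) = (\<Sum>e\<in>UNIV. G (\<sigma> e))"
  by (rule sum.reindex_bij_witness[where i=\<sigma> and j=\<sigma>]) (use assms in auto)

lemma fl_fin:
  assumes rs: "real_structure src tgt len \<tau> \<sigma> fl" and pos: "\<forall>e. 0 < len e" and "fl e"
  shows "len e = ereal (real_of_ereal (len e)) \<and> 0 < real_of_ereal (len e)"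
proof -
  have "len e \<noteq> \<infinity>" using rs assms(3) unfolding real_structure_def by blast
  moreover have "0 < len e" using pos by blast
  ultimately show ?thesis by (cases "len e") auto
qed

lemma conj_ep_nf:
  assumes rs: "real_structure src tgt len \<tau> \<sigma> fl" and "\<not> fl e"
  shows "conj_pt len \<tau> \<sigma> fl (edge_pt src tgt len e t) = edge_pt src tgt len (\<sigma> e) t"
  using assms unfolding real_structure_def by (auto simp: edge_pt_def conj_pt_def)

lemma conj_ep_fl:
  assumes rs: "real_structure src tgt len \<tau> \<sigma> fl" and pos: "\<forall>e. 0 < len e" and fle: "fl e"
  shows "conj_pt len \<tau> \<sigma> fl (edge_pt src tgt len e (ereal t)) =
         edge_pt src tgt len (\<sigma> e) (ereal (real_of_ereal (len e) - t))"
proof -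
  define L where "L = real_of_ereal (len e)"
  have L: "len e = ereal L" "0 < L" using fl_fin[OF rs pos fle] unfolding L_def by auto
  have rs': "len (\<sigma> e) = len e" "src (\<sigma> e) = \<tau> (tgt e)" "tgt (\<sigma> e) = \<tau> (src e)" "fl (\<sigma> e)"
    using rs fle unfolding real_structure_def by auto
  consider "t \<le> 0" | "0 < t" "L \<le> t" | "0 < t" "t < L" by linarith
  then show ?thesis
  proof cases
    case 1 then show ?thesis using L rs' by (simp add: edge_pt_def conj_pt_def flip: L_def)
  next
    case 2 then show ?thesis using L rs' by (simp add: edge_pt_def conj_pt_def flip: L_def)
  next
    case 3 then show ?thesis using L rs' fle by (simp add: edge_pt_def conj_pt_def flip: L_def)
  qed
qed

lemma conj_gpts:
  assumes rs: "real_structure src tgt len \<tau> \<sigma> fl" and pos: "\<forall>e. 0 < len e" and p: "p \<in> gpts len"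
  shows "conj_pt len \<tau> \<sigma> fl p \<in> gpts len"
proof (cases p)
  case (Vert v) then show ?thesis by (simp add: conj_pt_def gpts_def)
next
  case (Inner e t)
  then have t: "0 < t" "ereal t < len e" using p unfolding gpts_def by auto
  have ls: "len (\<sigma> e) = len e" using rs unfolding real_structure_def by auto
  show ?thesis
  proof (cases "fl e")
    case True
    define L where "L = real_of_ereal (len e)"
    have L: "len e = ereal L" "0 < L" using fl_fin[OF rs pos True] unfolding L_def by auto
    then show ?thesis using Inner t ls True unfolding conj_pt_def gpts_def L_def[symmetric] by auto
  next
    case False then show ?thesis using Inner t ls unfolding conj_pt_def gpts_def by auto
  qed
qed

lemma conj_conj:
  assumes rs: "real_structure src tgt len \<tau> \<sigma> fl"
  shows "conj_pt len \<tau> \<sigma> fl (conj_pt len \<tau> \<sigma> fl p) = p"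
  using rs unfolding real_structure_def by (cases p) (auto simp: conj_pt_def)

lemma efun_conj_nf:
  assumes rs: "real_structure src tgt len \<tau> \<sigma> fl" and "\<not> fl e"
  shows "efun src tgt len (\<lambda>p. f (conj_pt len \<tau> \<sigma> fl p)) e = efun src tgt len f (\<sigma> e)"
  using conj_ep_nf[OF assms] by (simp add: efun_def fun_eq_iff)

lemma efun_conj_fl:
  assumes rs: "real_structure src tgt len \<tau> \<sigma> fl" and pos: "\<forall>e. 0 < len e" and "fl e"
  shows "efun src tgt len (\<lambda>p. f (conj_pt len \<tau> \<sigma> fl p)) e =
         (\<lambda>s. efun src tgt len f (\<sigma> e) (real_of_ereal (len e) - s))"
  using conj_ep_fl[OF assms] by (simp add: efun_def fun_eq_iff)

lemma good_conj:
  assumes rs: "real_structure src tgt len \<tau> \<sigma> fl" and pos: "\<forall>e. 0 < len e"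
    and good: "\<forall>e. pw_good (efun src tgt len f e)"
  shows "pw_good (efun src tgt len (\<lambda>p. f (conj_pt len \<tau> \<sigma> fl p)) e)"
proof (cases "fl e")
  case True then show ?thesis using efun_conj_fl[OF rs pos True] good good_refl by metis
next
  case False then show ?thesis using efun_conj_nf[OF rs False] good by metis
qed

lemma lap_conj:
  fixes src tgt :: "'e::finite \<Rightarrow> 'v"
  assumes rs: "real_structure src tgt len \<tau> \<sigma> fl" and pos: "\<forall>e. 0 < len e"
    and good: "\<forall>e. pw_good (efun src tgt len f e)" and p: "p \<in> gpts len"
  shows "lap src tgt len (\<lambda>q. f (conj_pt len \<tau> \<sigma> fl q)) p = lap src tgt len f (conj_pt len \<tau> \<sigma> fl p)"
proof -
  define F where "F = (\<lambda>q. f (conj_pt len \<tau> \<sigma> fl q))"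
  define g where "g = efun src tgt len f"
  define gF where "gF = efun src tgt len F"
  define Lr where "Lr e = real_of_ereal (len e)" for e
  have ss: "\<sigma> (\<sigma> e) = e" "len (\<sigma> e) = len e" "fl (\<sigma> e) = fl e" "\<tau> (\<tau> v) = v" for e v
    using rs unfolding real_structure_def by auto
  have Lrs: "Lr (\<sigma> e) = Lr e" for e using ss unfolding Lr_def by simp
  have gnf: "\<not> fl e \<Longrightarrow> gF e = g (\<sigma> e)" for e
    unfolding gF_def g_def F_def using efun_conj_nf[OF rs] by blast
  have gfl: "fl e \<Longrightarrow> gF e = (\<lambda>s. g (\<sigma> e) (Lr e - s))" for e
    unfolding gF_def g_def F_def Lr_def using efun_conj_fl[OF rs pos] by blast
  have gg: "pw_good (g e)" for e using good unfolding g_def by blast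
  show ?thesis
  proof (cases p)
    case (Inner e t)
    show ?thesis
    proof (cases "fl e")
      case True
      have "lap src tgt len F p = rslope (gF e) t - lslope (gF e) t"
        unfolding lap_def Inner gF_def by simp
      also have "\<dots> = - lslope (g (\<sigma> e)) (Lr e - t) + rslope (g (\<sigma> e)) (Lr e - t)"
        unfolding gfl[OF True] rslope_refl[OF gg] lslope_refl[OF gg] by simp
      also have "\<dots> = lap src tgt len f (conj_pt len \<tau> \<sigma> fl p)"
        unfolding lap_def Inner conj_pt_def g_def Lr_def using True by simp
      finally show ?thesis unfolding F_def .
    next
      case False
      have "lap src tgt len F p = rslope (gF e) t - lslope (gF e) t"
        unfolding lap_def Inner gF_def by simp
      also have "\<dots> = lap src tgt len f (conj_pt len \<tau> \<sigma> fl p)"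
        unfolding lap_def Inner conj_pt_def g_def gnf[OF False] using False by simp
      finally show ?thesis unfolding F_def .
    qed
  next
    case (Vert v)
    define T where "T e = (if src e = v then rslope (gF e) 0 else 0) +
        (if tgt e = v \<and> len e \<noteq> \<infinity> then - lslope (gF e) (Lr e) else 0)" for e
    define S where "S e = (if src e = \<tau> v then rslope (g e) 0 else 0) +
        (if tgt e = \<tau> v \<and> len e \<noteq> \<infinity> then - lslope (g e) (Lr e) else 0)" for e
    have TS: "T (\<sigma> e) = S e" for e
    proof (cases "fl e")
      case True
      have r: "src (\<sigma> e) = \<tau> (tgt e)" "tgt (\<sigma> e) = \<tau> (src e)" "len e \<noteq> \<infinity>"
        using rs True unfolding real_structure_def by auto
      have e1: "src (\<sigma> e) = v \<longleftrightarrow> tgt e = \<tau> v" "tgt (\<sigma> e) = v \<longleftrightarrow> src e = \<tau> v"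
        using r ss by metis+
      have g1: "gF (\<sigma> e) = (\<lambda>s. g e (Lr e - s))" using gfl[of "\<sigma> e"] True ss Lrs by simp
      have "rslope (gF (\<sigma> e)) 0 = - lslope (g e) (Lr e)"
        unfolding g1 rslope_refl[OF gg] by simp
      moreover have "lslope (gF (\<sigma> e)) (Lr (\<sigma> e)) = - rslope (g e) 0"
        unfolding g1 lslope_refl[OF gg] Lrs by simp
      ultimately show ?thesis unfolding T_def S_def e1 using r ss by auto
    next
      case False
      have r: "src (\<sigma> e) = \<tau> (src e)" "tgt (\<sigma> e) = \<tau> (tgt e)"
        using rs False unfolding real_structure_def by auto
      have e1: "src (\<sigma> e) = v \<longleftrightarrow> src e = \<tau> v" "tgt (\<sigma> e) = v \<longleftrightarrow> tgt e = \<tau> v"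
        using r ss by metis+
      have g1: "gF (\<sigma> e) = g e" using gnf[of "\<sigma> e"] False ss by simp
      show ?thesis unfolding T_def S_def e1 g1 Lrs using ss by simp
    qed
    have "lap src tgt len F p = (\<Sum>e\<in>UNIV. T e)"
      unfolding lap_def Vert T_def gF_def Lr_def
      by (simp add: sum_filter_UNIV sum.distrib)
    also have "\<dots> = (\<Sum>e\<in>UNIV. T (\<sigma> e))" using sum_invol ss(1) by blast
    also have "\<dots> = (\<Sum>e\<in>UNIV. S e)" using TS by simp
    also have "\<dots> = lap src tgt len f (conj_pt len \<tau> \<sigma> fl p)"
      unfolding lap_def Vert S_def g_def Lr_def conj_pt_def
      by (simp add: sum_filter_UNIV sum.distrib)
    finally show ?thesis unfolding F_def .
  qed
qed



lemma good_cont: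
  assumes "pw_good g" shows "isCont g t"
proof -
  obtain c1 d1 where 1: "d1 > 0" "\<forall>s\<in>{t..t+d1}. g s = rslope g t * s + c1"
    using good_rgerm[OF assms] by blast
  obtain c2 d2 where 2: "d2 > 0" "\<forall>s\<in>{t-d2..t}. g s = lslope g t * s + c2"
    using good_lgerm[OF assms] by blast
  have ev1: "eventually (\<lambda>s. rslope g t * s + c1 = g s) (at_right t)"
    using eventually_at_right_real[of t "t+d1"] 1 by (auto elim!: eventually_mono)
  have ev2: "eventually (\<lambda>s. lslope g t * s + c2 = g s) (at_left t)"
  proof -
    have "eventually (\<lambda>s. s \<in> {t-d2<..<t}) (at_left t)"
      using 2(1) by (intro eventually_at_left_real) simp
    then show ?thesis by (rule eventually_mono) (use 2 in auto)
  qed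
  have "((\<lambda>s. rslope g t * s + c1) \<longlongrightarrow> rslope g t * t + c1) (at_right t)"
    by (intro tendsto_intros)
  then have r: "(g \<longlongrightarrow> g t) (at_right t)"
    using tendsto_cong[OF ev1] 1 by auto
  have "((\<lambda>s. lslope g t * s + c2) \<longlongrightarrow> lslope g t * t + c2) (at_left t)"
    by (intro tendsto_intros)
  then have l: "(g \<longlongrightarrow> g t) (at_left t)"
    using tendsto_cong[OF ev2] 2 by auto
  show ?thesis
    using r l by (simp add: continuous_at filterlim_at_split)
qed

lemma good_nbhd:
  assumes "pw_good g" "g t < M"
  shows "\<exists>\<delta>>0. \<forall>s. \<bar>s - t\<bar> < \<delta> \<longrightarrow> g s < M"
proof -
  have "g \<midarrow>t\<rightarrow> g t" using good_cont[OF assms(1)] by (simp add: continuous_at)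
  then have "eventually (\<lambda>s. g s < M) (at t)" using assms(2) by (rule order_tendstoD(2))
  then obtain d where d: "d > 0" "\<forall>s. s \<noteq> t \<and> dist s t < d \<longrightarrow> g s < M"
    unfolding eventually_at by auto
  show ?thesis
    using d assms(2) by (intro exI[of _ d]) (auto simp: dist_real_def)
qed

lemma signs_at_max:
  assumes good: "pw_good g" and bound: "\<forall>s. g s \<le> mx" and eq: "g r = mx"
  shows "rslope g r \<le> 0 \<and> 0 \<le> lslope g r"
proof
  obtain c d where 1: "d > 0" "\<forall>s\<in>{r..r+d}. g s = rslope g r * s + c"
    using good_rgerm[OF good] by blast
  have "rslope g r * (r + d) + c \<le> rslope g r * r + c"
    using 1 bound eq by (metis atLeastAtMost_iff le_add_same_cancel1 less_eq_real_def order_refl)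
  then have "rslope g r * d \<le> 0" by (simp add: algebra_simps)
  then show "rslope g r \<le> 0" using 1(1) by (simp add: mult_le_0_iff)
next
  obtain c d where 1: "d > 0" "\<forall>s\<in>{r-d..r}. g s = lslope g r * s + c"
    using good_lgerm[OF good] by blast
  have "lslope g r * (r - d) + c \<le> lslope g r * r + c"
    using 1 bound eq by (metis atLeastAtMost_iff diff_le_eq le_add_same_cancel1 less_eq_real_def order_refl)
  then have "0 \<le> lslope g r * d" by (simp add: algebra_simps)
  then show "0 \<le> lslope g r" using 1(1) by (simp add: zero_le_mult_iff)
qed

lemma const_at_max:
  assumes good: "pw_good g" and eq: "g r = mx" and "rslope g r = 0" "lslope g r = 0"
  shows "\<exists>\<delta>>0. \<forall>s. \<bar>s - r\<bar> < \<delta> \<longrightarrow> g s = mx"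
proof -
  obtain c1 d1 where 1: "d1 > 0" "\<forall>s\<in>{r..r+d1}. g s = rslope g r * s + c1"
    using good_rgerm[OF good] by blast
  obtain c2 d2 where 2: "d2 > 0" "\<forall>s\<in>{r-d2..r}. g s = lslope g r * s + c2"
    using good_lgerm[OF good] by blast
  have c1: "c1 = mx" using 1 eq assms(3) by auto
  have c2: "c2 = mx" using 2 eq assms(4) by auto
  show ?thesis
  proof (intro exI[of _ "min d1 d2"] conjI allI impI)
    show "0 < min d1 d2" using 1 2 by simp
    fix s assume "\<bar>s - r\<bar> < min d1 d2"
    then show "g s = mx" using 1 2 c1 c2 assms(3,4)
      by (cases "r \<le> s") auto
  qed
qed

lemma openin_edge_crit:
  fixes L :: ereal and S :: "ereal set"
  assumes sub: "S \<subseteq> {0..L}"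
    and fin: "\<forall>t\<in>S. t \<noteq> \<infinity> \<longrightarrow> (\<exists>\<delta>>0. \<forall>s. 0 \<le> s \<and> ereal s \<le> L \<and> \<bar>s - real_of_ereal t\<bar> < \<delta> \<longrightarrow> ereal s \<in> S)"
    and inf: "\<forall>t\<in>S. t = \<infinity> \<longrightarrow> (\<exists>a. \<forall>s. 0 \<le> s \<and> a < s \<longrightarrow> ereal s \<in> S)"
  shows "openin (top_of_set {0..L}) S"
  unfolding openin_subopen[of _ S]
proof
  fix t assume tS: "t \<in> S"
  then have t0: "0 \<le> t" "t \<le> L" using sub by auto
  show "\<exists>T. openin (top_of_set {0..L}) T \<and> t \<in> T \<and> T \<subseteq> S"
  proof (cases "t = \<infinity>")
    case True
    then obtain a where a: "\<forall>s. 0 \<le> s \<and> a < s \<longrightarrow> ereal s \<in> S" using inf tS by blast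
    show ?thesis
    proof (intro exI[of _ "{0..L} \<inter> {ereal a<..}"] conjI)
      show "openin (top_of_set {0..L}) ({0..L} \<inter> {ereal a<..})" by (rule openin_open_Int) simp
      show "t \<in> {0..L} \<inter> {ereal a<..}" using t0 True by simp
      show "{0..L} \<inter> {ereal a<..} \<subseteq> S"
      proof
        fix x assume x: "x \<in> {0..L} \<inter> {ereal a<..}"
        show "x \<in> S"
        proof (cases x)
          case (real s) then show ?thesis using x a by auto
        next
          case PInf then show ?thesis using True tS by simp
        next
          case MInf then show ?thesis using x by simp
        qed
      qed
    qed
  next
    case False
    then obtain r where r: "t = ereal r" using t0 by (cases t) auto
    obtain d where d: "d > 0" "\<forall>s. 0 \<le> s \<and> ereal s \<le> L \<and> \<bar>s - r\<bar> < d \<longrightarrow> ereal s \<in> S"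
      using fin tS False r by fastforce
    show ?thesis
    proof (intro exI[of _ "{0..L} \<inter> {ereal (r - d)<..<ereal (r + d)}"] conjI)
      show "openin (top_of_set {0..L}) ({0..L} \<inter> {ereal (r - d)<..<ereal (r + d)})"
        by (rule openin_open_Int) simp
      show "t \<in> {0..L} \<inter> {ereal (r - d)<..<ereal (r + d)}" using t0 r d by simp
      show "{0..L} \<inter> {ereal (r - d)<..<ereal (r + d)} \<subseteq> S"
      proof
        fix x assume x: "x \<in> {0..L} \<inter> {ereal (r - d)<..<ereal (r + d)}"
        show "x \<in> S"
        proof (cases x)
          case (real s)
          then have "0 \<le> s" "ereal s \<le> L" "\<bar>s - r\<bar> < d" using x by auto
          then show ?thesis using d real by blast
        next
          case PInf then show ?thesis using x by simp
        next
          case MInf then show ?thesis using x by simp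
        qed
      qed
    qed
  qed
qed

lemma open_level:
  assumes loc: "\<forall>e r. Q (efun src tgt len h e r) \<longrightarrow> (\<exists>\<delta>>0. \<forall>s. \<bar>s - r\<bar> < \<delta> \<longrightarrow> Q (efun src tgt len h e s))"
    and tail: "\<forall>e. len e = \<infinity> \<longrightarrow> (\<exists>a. \<forall>s\<ge>a. efun src tgt len h e s = h (Vert (tgt e)))"
  shows "openin (gtop src tgt len) {p \<in> gpts len. Q (h p)}"
  unfolding openin_gtop
proof (intro conjI allI)
  show "{p \<in> gpts len. Q (h p)} \<subseteq> gpts len" by blast
  fix e
  let ?S = "{t \<in> {0..len e}. edge_pt src tgt len e t \<in> {p \<in> gpts len. Q (h p)}}"
  show "openin (top_of_set {0..len e}) ?S"
  proof (rule openin_edge_crit)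
    show "?S \<subseteq> {0..len e}" by blast
    show "\<forall>t\<in>?S. t \<noteq> \<infinity> \<longrightarrow> (\<exists>\<delta>>0. \<forall>s. 0 \<le> s \<and> ereal s \<le> len e \<and> \<bar>s - real_of_ereal t\<bar> < \<delta> \<longrightarrow> ereal s \<in> ?S)"
    proof (intro ballI impI)
      fix t assume tS: "t \<in> ?S" and ti: "t \<noteq> \<infinity>"
      then obtain r where r: "t = ereal r" by (cases t) auto
      have "Q (efun src tgt len h e r)" using tS r by (simp add: efun_def)
      then obtain d where d: "d > 0" "\<forall>s. \<bar>s - r\<bar> < d \<longrightarrow> Q (efun src tgt len h e s)" using loc by blast
      show "\<exists>\<delta>>0. \<forall>s. 0 \<le> s \<and> ereal s \<le> len e \<and> \<bar>s - real_of_ereal t\<bar> < \<delta> \<longrightarrow> ereal s \<in> ?S"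
        using d r by (intro exI[of _ d]) (auto simp: efun_def ep_in)
    qed
    show "\<forall>t\<in>?S. t = \<infinity> \<longrightarrow> (\<exists>a. \<forall>s. 0 \<le> s \<and> a < s \<longrightarrow> ereal s \<in> ?S)"
    proof (intro ballI impI)
      fix t assume tS: "t \<in> ?S" and ti: "t = \<infinity>"
      then have li: "len e = \<infinity>" by auto
      have "edge_pt src tgt len e \<infinity> = Vert (tgt e)" using li by (simp add: edge_pt_def)
      then have Qv: "Q (h (Vert (tgt e)))" using tS ti by auto
      obtain a where a: "\<forall>s\<ge>a. efun src tgt len h e s = h (Vert (tgt e))" using tail li by blast
      show "\<exists>a. \<forall>s. 0 \<le> s \<and> a < s \<longrightarrow> ereal s \<in> ?S"
        using a Qv li by (intro exI[of _ a]) (auto simp: efun_def ep_in)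
    qed
  qed
qed



lemma vertex_at_max:
  fixes src tgt :: "'e::finite \<Rightarrow> 'v"
  assumes pos: "\<forall>e. 0 < len e"
    and good: "\<forall>e. pw_good (efun src tgt len h e)"
    and bound: "\<forall>e s. efun src tgt len h e s \<le> mx"
    and harm: "lap src tgt len h (Vert v) = 0"
    and hv: "h (Vert v) = mx"
  shows "(\<forall>e. src e = v \<longrightarrow> rslope (efun src tgt len h e) 0 = 0) \<and>
         (\<forall>e. tgt e = v \<and> len e \<noteq> \<infinity> \<longrightarrow> lslope (efun src tgt len h e) (real_of_ereal (len e)) = 0)"
proof -
  let ?g = "efun src tgt len h"
  have r: "rslope (?g e) 0 \<le> 0" if "src e = v" for e
  proof -
    have "?g e 0 = mx" using that hv by (simp add: efun_0)
    then show ?thesis using signs_at_max[of "?g e" mx 0] good bound by blast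
  qed
  have l: "0 \<le> lslope (?g e) (real_of_ereal (len e))" if tv: "tgt e = v" and fe: "len e \<noteq> \<infinity>" for e
  proof -
    have "0 < len e" using pos by blast
    then obtain L where L: "len e = ereal L" "0 < L" using fe by (cases "len e") auto
    have "?g e L = h (Vert (tgt e))" using L by (intro efun_geL) auto
    then have "?g e L = mx" using tv hv by simp
    then show ?thesis using signs_at_max[of "?g e" mx L] good bound L by auto
  qed
  define A where "A = (\<Sum>e | src e = v. rslope (?g e) 0)"
  define B where "B = (\<Sum>e | tgt e = v \<and> len e \<noteq> \<infinity>. - lslope (?g e) (real_of_ereal (len e)))"
  have A: "A \<le> 0" unfolding A_def by (rule sum_nonpos) (use r in auto)
  have B: "B \<le> 0" unfolding B_def by (rule sum_nonpos) (use l in auto)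
  have "A + B = 0" using harm unfolding A_def B_def lap_def by simp
  then have AB: "A = 0" "B = 0" using A B by auto
  have "\<forall>e\<in>{e. src e = v}. - rslope (?g e) 0 = 0"
    using sum_nonneg_eq_0_iff[of "{e. src e = v}" "\<lambda>e. - rslope (?g e) 0"] AB(1) r
    unfolding A_def by (simp add: sum_negf)
  moreover have "\<forall>e\<in>{e. tgt e = v \<and> len e \<noteq> \<infinity>}. lslope (?g e) (real_of_ereal (len e)) = 0"
    using sum_nonneg_eq_0_iff[of "{e. tgt e = v \<and> len e \<noteq> \<infinity>}" "\<lambda>e. lslope (?g e) (real_of_ereal (len e))"] AB(2) l
    unfolding B_def by (simp add: sum_negf)
  ultimately show ?thesis by auto
qed

lemma max_principle:
  fixes src tgt :: "'e::finite \<Rightarrow> 'v::finite"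
  assumes pos: "\<forall>e. 0 < len e"
    and conn: "connected_space (gtop src tgt len)"
    and good: "\<forall>e. pw_good (efun src tgt len h e)"
    and tail: "\<forall>e. len e = \<infinity> \<longrightarrow> (\<exists>a. \<forall>s\<ge>a. efun src tgt len h e s = h (Vert (tgt e)))"
    and harm: "\<forall>p\<in>gpts len. lap src tgt len h p = 0"
  shows "\<exists>c. \<forall>p\<in>gpts len. h p = c"
proof -
  let ?g = "efun src tgt len h"
  have vg: "Vert v \<in> gpts len" for v :: 'v by (simp add: gpts_def)
  have edge_max: "\<exists>q\<in>gpts len. \<forall>s. 0 < s \<longrightarrow> ereal s < len e \<longrightarrow> ?g e s \<le> h q" for e
  proof (cases "len e = \<infinity>")
    case True
    then obtain a where a: "\<forall>s\<ge>a. ?g e s = h (Vert (tgt e))" using tail by blast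
    have "continuous_on {0..\<bar>a\<bar>} (?g e)"
      using good good_cont by (intro continuous_at_imp_continuous_on) blast
    then obtain s0 where s0: "s0 \<in> {0..\<bar>a\<bar>}" "\<forall>s\<in>{0..\<bar>a\<bar>}. ?g e s \<le> ?g e s0"
      using continuous_attains_sup[of "{0..\<bar>a\<bar>}" "?g e"] by auto
    define q where "q = (if h (Vert (tgt e)) \<le> ?g e s0 then edge_pt src tgt len e (ereal s0) else Vert (tgt e))"
    have "h q = max (?g e s0) (h (Vert (tgt e)))" unfolding q_def by (auto simp: efun_def)
    moreover have "q \<in> gpts len" unfolding q_def using ep_in vg by auto
    moreover have "?g e s \<le> max (?g e s0) (h (Vert (tgt e)))" if "0 < s" for s
    proof (cases "s \<le> \<bar>a\<bar>")
      case True
      then have "?g e s \<le> ?g e s0" using s0(2) that by auto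
      then show ?thesis by (simp add: max.coboundedI1)
    next
      case False then show ?thesis using a by auto
    qed
    ultimately show ?thesis by metis
  next
    case False
    have "0 < len e" using pos by blast
    then obtain L where L: "len e = ereal L" "0 < L" using False by (cases "len e") auto
    have "continuous_on {0..L} (?g e)"
      using good good_cont by (intro continuous_at_imp_continuous_on) blast
    then obtain s0 where s0: "s0 \<in> {0..L}" "\<forall>s\<in>{0..L}. ?g e s \<le> ?g e s0"
      using continuous_attains_sup[of "{0..L}" "?g e"] L by auto
    show ?thesis
      by (rule bexI[of _ "edge_pt src tgt len e (ereal s0)"]) (use s0 L in \<open>auto simp: efun_def ep_in\<close>)
  qed
  then obtain Q where Q: "\<forall>e. Q e \<in> gpts len \<and> (\<forall>s. 0 < s \<longrightarrow> ereal s < len e \<longrightarrow> ?g e s \<le> h (Q e))"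
    by metis
  define C where "C = range Vert \<union> range Q"
  have Cfin: "finite C" unfolding C_def by simp
  have Cne: "C \<noteq> {}" unfolding C_def by simp
  define mx where "mx = Max (h ` C)"
  have "mx \<in> h ` C" unfolding mx_def using Cfin Cne by (intro Max_in) auto
  then obtain p0 where p0: "p0 \<in> C" "h p0 = mx" by auto
  have p0g: "p0 \<in> gpts len" using p0 Q vg unfolding C_def by auto
  have Cle: "q \<in> C \<Longrightarrow> h q \<le> mx" for q unfolding mx_def using Cfin by (intro Max_ge) auto
  have hle: "\<forall>p\<in>gpts len. h p \<le> mx"
  proof
    fix p :: "('v, 'e) gpt" assume p: "p \<in> gpts len"
    show "h p \<le> mx"
    proof (cases p)
      case (Vert v) then show ?thesis using Cle unfolding C_def by auto
    next
      case (Inner e t)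
      then have t: "0 < t" "ereal t < len e" using p unfolding gpts_def by auto
      then have "h p = ?g e t" using Inner by (simp add: efun_inner)
      also have "\<dots> \<le> h (Q e)" using Q t by blast
      also have "\<dots> \<le> mx" using Cle unfolding C_def by auto
      finally show ?thesis .
    qed
  qed
  have bound: "\<forall>e s. ?g e s \<le> mx" unfolding efun_def by (intro allI) (rule hle[rule_format, OF ep_in])
  have vmax: "\<And>v. h (Vert v) = mx \<Longrightarrow>
      (\<forall>e. src e = v \<longrightarrow> rslope (?g e) 0 = 0) \<and>
      (\<forall>e. tgt e = v \<and> len e \<noteq> \<infinity> \<longrightarrow> lslope (?g e) (real_of_ereal (len e)) = 0)"
    using vertex_at_max[OF pos good bound] harm vg by blast
  have locmax: "\<forall>e r. ?g e r = mx \<longrightarrow> (\<exists>\<delta>>0. \<forall>s. \<bar>s - r\<bar> < \<delta> \<longrightarrow> ?g e s = mx)"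
  proof (intro allI impI)
    fix e r assume er: "?g e r = mx"
    have sg: "rslope (?g e) r \<le> 0 \<and> 0 \<le> lslope (?g e) r"
      using signs_at_max[of "?g e" mx r] good bound er by blast
    have slopes: "rslope (?g e) r = 0 \<and> lslope (?g e) r = 0"
    proof -
      consider "r < 0" | "r = 0" | "0 < r" "ereal r < len e" | "0 < r" "len e \<le> ereal r" by force
      then show ?thesis
      proof cases
        case 1
        have "rslope (?g e) r = 0"
          by (rule rslope_aff[where \<delta>="-r" and c="h (Vert (src e))"]) (use 1 in \<open>auto simp: efun_le0\<close>)
        moreover have "lslope (?g e) r = 0"
          by (rule lslope_aff[where \<delta>=1 and c="h (Vert (src e))"]) (use 1 in \<open>auto simp: efun_le0\<close>)
        ultimately show ?thesis by simp
      next
        case 2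
        have "lslope (?g e) r = 0"
          by (rule lslope_aff[where \<delta>=1 and c="h (Vert (src e))"]) (use 2 in \<open>auto simp: efun_le0\<close>)
        moreover have "h (Vert (src e)) = mx" using er 2 by (simp add: efun_0)
        then have "rslope (?g e) 0 = 0" using vmax by blast
        ultimately show ?thesis using 2 by simp
      next
        case 3
        have "Inner e r \<in> gpts len" using 3 unfolding gpts_def by auto
        then have "lap src tgt len h (Inner e r) = 0" using harm by blast
        then have "rslope (?g e) r = lslope (?g e) r" unfolding lap_def by simp
        then show ?thesis using sg by simp
      next
        case 4
        have "0 < len e" using pos by blast
        then obtain L where L: "len e = ereal L" "0 < L" "L \<le> r" using 4 by (cases "len e") auto
        have geL: "\<And>s. L \<le> s \<Longrightarrow> ?g e s = h (Vert (tgt e))"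
          using L by (intro efun_geL) auto
        have "rslope (?g e) r = 0"
          by (rule rslope_aff[where \<delta>=1 and c="h (Vert (tgt e))"]) (use L in \<open>auto simp: geL\<close>)
        moreover have "lslope (?g e) r = 0"
        proof (cases "L < r")
          case True show ?thesis
            by (rule lslope_aff[where \<delta>="r - L" and c="h (Vert (tgt e))"]) (use L True in \<open>auto simp: geL\<close>)
        next
          case False
          then have rL: "r = L" using L by simp
          have "h (Vert (tgt e)) = mx" using er geL rL by simp
          then have "\<forall>e'. tgt e' = tgt e \<and> len e' \<noteq> \<infinity> \<longrightarrow> lslope (?g e') (real_of_ereal (len e')) = 0"
            using vmax by blast
          then have "tgt e = tgt e \<and> len e \<noteq> \<infinity> \<longrightarrow> lslope (?g e) (real_of_ereal (len e)) = 0"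
            by (rule spec)
          then have "lslope (?g e) (real_of_ereal (len e)) = 0" using L by simp
          then show ?thesis using L rL by simp
        qed
        ultimately show ?thesis by simp
      qed
    qed
    show "\<exists>\<delta>>0. \<forall>s. \<bar>s - r\<bar> < \<delta> \<longrightarrow> ?g e s = mx"
      using const_at_max[of "?g e" r mx] good er slopes by blast
  qed
  have locless: "\<forall>e r. ?g e r < mx \<longrightarrow> (\<exists>\<delta>>0. \<forall>s. \<bar>s - r\<bar> < \<delta> \<longrightarrow> ?g e s < mx)"
    using good good_nbhd by blast
  have oM: "openin (gtop src tgt len) {p \<in> gpts len. h p = mx}"
    using open_level[of "\<lambda>x. x = mx"] locmax tail by blast
  have oN: "openin (gtop src tgt len) {p \<in> gpts len. h p < mx}"
    using open_level[of "\<lambda>x. x < mx"] locless tail by blast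
  have eqN: "topspace (gtop src tgt len) - {p \<in> gpts len. h p = mx} = {p \<in> gpts len. h p < mx}"
    using hle topspace_gtop by fastforce
  have cM: "closedin (gtop src tgt len) {p \<in> gpts len. h p = mx}"
    unfolding closedin_def eqN using oN unfolding topspace_gtop by auto
  have "{p \<in> gpts len. h p = mx} = {} \<or> {p \<in> gpts len. h p = mx} = topspace (gtop src tgt len)"
    using conn oM cM unfolding connected_space_clopen_in by blast
  moreover have "p0 \<in> {p \<in> gpts len. h p = mx}" using p0 p0g by simp
  ultimately have "{p \<in> gpts len. h p = mx} = gpts len" unfolding topspace_gtop by blast
  then show ?thesis by blast
qed



lemma lap_diff:
  fixes src tgt :: "'e::finite \<Rightarrow> 'v"
  assumes g1: "\<forall>e. pw_good (efun src tgt len F e)" and g2: "\<forall>e. pw_good (efun src tgt len f e)"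
  shows "lap src tgt len (\<lambda>q. F q - f q) p = lap src tgt len F p - lap src tgt len f p"
proof -
  have ef: "efun src tgt len (\<lambda>q. F q - f q) e = (\<lambda>s. efun src tgt len F e s - efun src tgt len f e s)" for e
    by (simp add: efun_def fun_eq_iff)
  show ?thesis
  proof (cases p)
    case (Inner e t) then show ?thesis
      unfolding lap_def ef using rslope_diff[OF g1[rule_format] g2[rule_format]]
        lslope_diff[OF g1[rule_format] g2[rule_format]] by simp
  next
    case (Vert v) then show ?thesis
      unfolding lap_def ef using rslope_diff[OF g1[rule_format] g2[rule_format]]
        lslope_diff[OF g1[rule_format] g2[rule_format]] by (simp add: sum_subtractf sum_negf)
  qed
qed

lemma f_invariant:
  fixes src tgt :: "'e::finite \<Rightarrow> 'v::finite"
  assumes model: "metric_graph_model src tgt len"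
    and rs: "real_structure src tgt len \<tau> \<sigma> fl"
    and rf: "rational_fn src tgt len f"
    and lapd: "\<forall>p\<in>gpts len. lap src tgt len f (conj_pt len \<tau> \<sigma> fl p) = lap src tgt len f p"
  shows "\<forall>p\<in>gpts len. f (conj_pt len \<tau> \<sigma> fl p) = f p"
proof -
  have pos: "\<forall>e. 0 < len e" and conn: "connected_space (gtop src tgt len)"
    using model unfolding metric_graph_model_def by auto
  have goodf: "\<forall>e. pw_good (efun src tgt len f e)"
    using rf pos by (auto intro!: rational_good simp: rational_fn_def)
  define F where "F = (\<lambda>q. f (conj_pt len \<tau> \<sigma> fl q))"
  have goodF: "\<forall>e. pw_good (efun src tgt len F e)"
    unfolding F_def using good_conj[OF rs pos goodf] by blast
  define h where "h = (\<lambda>q. F q - f q)"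
  have efh: "efun src tgt len h e = (\<lambda>s. efun src tgt len F e s - efun src tgt len f e s)" for e
    by (simp add: efun_def fun_eq_iff h_def)
  have goodh: "\<forall>e. pw_good (efun src tgt len h e)"
    unfolding efh using good_diff goodF goodf by blast
  have ss: "\<sigma> (\<sigma> e) = e" "len (\<sigma> e) = len e" "fl (\<sigma> e) = fl e" "\<tau> (\<tau> v) = v" for e v
    using rs unfolding real_structure_def by auto
  have tailh: "\<forall>e. len e = \<infinity> \<longrightarrow> (\<exists>a. \<forall>s\<ge>a. efun src tgt len h e s = h (Vert (tgt e)))"
  proof (intro allI impI)
    fix e assume inf: "len e = \<infinity>"
    then have nf: "\<not> fl e" using rs unfolding real_structure_def by auto
    have tg: "tgt (\<sigma> e) = \<tau> (tgt e)" using rs nf unfolding real_structure_def by auto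
    obtain a1 where a1: "\<forall>s\<ge>a1. efun src tgt len f e s = f (Vert (tgt e))"
      using rational_tail[OF rf inf] by blast
    obtain a2 where a2: "\<forall>s\<ge>a2. efun src tgt len f (\<sigma> e) s = f (Vert (tgt (\<sigma> e)))"
      using rational_tail[OF rf, of "\<sigma> e"] inf ss(2)[of e] by auto
    have eF: "efun src tgt len F e = efun src tgt len f (\<sigma> e)"
      unfolding F_def by (rule efun_conj_nf[OF rs nf])
    show "\<exists>a. \<forall>s\<ge>a. efun src tgt len h e s = h (Vert (tgt e))"
    proof (intro exI[of _ "max a1 a2"] allI impI)
      fix s assume s: "max a1 a2 \<le> s"
      have "efun src tgt len h e s = efun src tgt len f (\<sigma> e) s - efun src tgt len f e s"
        by (simp only: efh eF)
      also have "\<dots> = f (Vert (\<tau> (tgt e))) - f (Vert (tgt e))" using a1 a2 tg s by simp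
      also have "\<dots> = h (Vert (tgt e))" by (simp add: h_def F_def conj_pt_def)
      finally show "efun src tgt len h e s = h (Vert (tgt e))" .
    qed
  qed
  have harm: "\<forall>p\<in>gpts len. lap src tgt len h p = 0"
  proof
    fix p :: "('v, 'e) gpt" assume p: "p \<in> gpts len"
    have "lap src tgt len h p = lap src tgt len F p - lap src tgt len f p"
      unfolding h_def by (rule lap_diff[OF goodF goodf])
    also have "lap src tgt len F p = lap src tgt len f (conj_pt len \<tau> \<sigma> fl p)"
      unfolding F_def by (rule lap_conj[OF rs pos goodf p])
    finally show "lap src tgt len h p = 0" using lapd p by simp
  qed
  obtain c where c: "\<forall>p\<in>gpts len. h p = c"
    using max_principle[OF pos conn goodh tailh harm] by blast
  have vg: "Vert undefined \<in> gpts len" by (simp add: gpts_def)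
  let ?p = "Vert undefined :: ('v, 'e) gpt"
  have cg: "conj_pt len \<tau> \<sigma> fl ?p \<in> gpts len" by (rule conj_gpts[OF rs pos vg])
  have "h (conj_pt len \<tau> \<sigma> fl ?p) = - h ?p"
    unfolding h_def F_def conj_conj[OF rs] by simp
  then have "c = 0" using c vg cg by auto
  then show ?thesis using c unfolding h_def F_def by auto
qed



lemma invol_parity:
  fixes w :: "'a \<Rightarrow> real"
  assumes "finite A" "\<forall>x\<in>A. \<phi> x \<in> A \<and> \<phi> (\<phi> x) = x" "\<forall>x\<in>A. w (\<phi> x) = w x" "\<forall>x\<in>A. w x \<in> \<int>"
  shows "\<exists>k::int. (\<Sum>x\<in>A. w x) = (\<Sum>x\<in>{x\<in>A. \<phi> x = x}. w x) + 2 * of_int k"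
  using assms
proof (induction "card A" arbitrary: A rule: less_induct)
  case less
  show ?case
  proof (cases "\<forall>x\<in>A. \<phi> x = x")
    case True
    then have "{x\<in>A. \<phi> x = x} = A" by auto
    then show ?thesis by (intro exI[of _ 0]) simp
  next
    case False
    then obtain x where x: "x \<in> A" "\<phi> x \<noteq> x" by blast
    define A' where "A' = A - {x, \<phi> x}"
    have px: "\<phi> x \<in> A" using less.prems x by blast
    have c: "card A' < card A" unfolding A'_def using less.prems(1) x px
      by (metis Diff_insert2 card_Diff2_less)
    have p2: "\<forall>y\<in>A'. \<phi> y \<in> A' \<and> \<phi> (\<phi> y) = y"
      unfolding A'_def using less.prems(2) x by auto metis+
    obtain k where k: "(\<Sum>y\<in>A'. w y) = (\<Sum>y\<in>{y\<in>A'. \<phi> y = y}. w y) + 2 * of_int k"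
      using less.hyps[OF c] less.prems p2 unfolding A'_def by auto
    obtain j :: int where j: "w x = of_int j" using less.prems(4) x by (auto elim: Ints_cases)
    have fix_eq: "{y\<in>A'. \<phi> y = y} = {y\<in>A. \<phi> y = y}"
      unfolding A'_def using x less.prems(2) by auto
    have Asplit: "A = insert x (insert (\<phi> x) A')" unfolding A'_def using x px by auto
    have "(\<Sum>y\<in>A. w y) = w x + w (\<phi> x) + (\<Sum>y\<in>A'. w y)"
      unfolding Asplit using less.prems(1) x unfolding A'_def by (simp add: add.assoc)
    also have "\<dots> = (\<Sum>y\<in>{y\<in>A. \<phi> y = y}. w y) + 2 * of_int (k + j)"
      using k j fix_eq less.prems(3) x by simp
    finally show ?thesis by blast
  qed
qed

lemma even_sum:
  fixes x :: "'a \<Rightarrow> real"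
  assumes "finite A" "\<forall>p\<in>A. \<exists>k::int. x p = 2 * of_int k"
  shows "\<exists>k::int. (\<Sum>p\<in>A. x p) = 2 * of_int k"
proof -
  obtain kf :: "'a \<Rightarrow> int" where kf: "\<forall>p\<in>A. x p = 2 * of_int (kf p)" using assms(2) by metis
  have "(\<Sum>p\<in>A. x p) = 2 * of_int (\<Sum>p\<in>A. kf p)"
    using kf by (simp add: sum_distrib_left)
  then show ?thesis by blast
qed

lemma no_break_const:
  assumes good: "pw_good g" and ab: "a < b"
    and nb: "\<forall>t\<in>{a<..<b}. rslope g t = lslope g t"
  shows "rslope g a = lslope g b"
proof -
  let ?A = "{a<..<b}"
  have loc: "\<forall>t\<in>?A. eventually (\<lambda>s. rslope g t = rslope g s) (at t within ?A)"
  proof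
    fix t assume t: "t \<in> ?A"
    obtain c1 d1 where 1: "d1 > 0" "\<forall>s\<in>{t..t+d1}. g s = rslope g t * s + c1"
      using good_rgerm[OF good] by blast
    obtain c2 d2 where 2: "d2 > 0" "\<forall>s\<in>{t-d2..t}. g s = lslope g t * s + c2"
      using good_lgerm[OF good] by blast
    show "eventually (\<lambda>s. rslope g t = rslope g s) (at t within ?A)"
      unfolding eventually_at
    proof (intro exI[of _ "min d1 d2"] conjI ballI impI)
      show "0 < min d1 d2" using 1 2 by simp
      fix s assume s: "s \<in> ?A" "s \<noteq> t \<and> dist s t < min d1 d2"
      show "rslope g t = rslope g s"
      proof (cases "t < s")
        case True
        have "rslope g s = rslope g t"
          by (rule rslope_aff[where \<delta>="t + d1 - s" and c=c1]) (use 1 s True in \<open>auto simp: dist_real_def\<close>)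
        then show ?thesis by simp
      next
        case False
        then have st: "s < t" using s by auto
        have "lslope g s = lslope g t"
          by (rule lslope_aff[where \<delta>="s - (t - d2)" and c=c2]) (use 2 s st in \<open>auto simp: dist_real_def\<close>)
        then show ?thesis using nb s t by simp
      qed
    qed
  qed
  obtain c1 d1 where 1: "d1 > 0" "\<forall>s\<in>{a..a+d1}. g s = rslope g a * s + c1"
    using good_rgerm[OF good] by blast
  obtain c2 d2 where 2: "d2 > 0" "\<forall>s\<in>{b-d2..b}. g s = lslope g b * s + c2"
    using good_lgerm[OF good] by blast
  obtain \<mu>1 where m1: "\<mu>1 \<le> b - a" "\<mu>1 \<le> d1" "0 < \<mu>1" using ab 1(1)
    by (intro that[of "min d1 (b - a)"]) simp_all
  obtain \<mu>2 where m2: "\<mu>2 \<le> b - a" "\<mu>2 \<le> d2" "0 < \<mu>2" using ab 2(1)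
    by (intro that[of "min d2 (b - a)"]) simp_all
  define s1 where "s1 = a + \<mu>1 / 2"
  define s2 where "s2 = b - \<mu>2 / 2"
  have s1a1: "a < s1" using m1 s1_def by linarith
  have s1a2: "s1 < b" using m1 s1_def by linarith
  have s1a3: "s1 < a + d1" using m1 s1_def by linarith
  have s2a1: "a < s2" using m2 s2_def by linarith
  have s2a2: "s2 < b" using m2 s2_def by linarith
  have s2a3: "b - d2 < s2" using m2 s2_def by linarith
  note s1a = s1a1 s1a2 s1a3 and s2a = s2a1 s2a2 s2a3
  have s1: "s1 \<in> ?A" "s1 < a + d1" using s1a by auto
  have s2: "s2 \<in> ?A" "b - d2 < s2" using s2a by auto
  have r1: "rslope g s1 = rslope g a"
    by (rule rslope_aff[where \<delta>="a + d1 - s1" and c=c1]) (use 1 s1 in auto)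
  have l2: "lslope g s2 = lslope g b"
    by (rule lslope_aff[where \<delta>="s2 - (b - d2)" and c=c2]) (use 2 s2 in auto)
  have "rslope g s1 = rslope g s2"
    by (rule connected_local_const[OF _ s1(1) s2(1) loc]) simp
  then show ?thesis using r1 l2 nb s2 by simp
qed

lemma telescope:
  assumes good: "pw_good g"
  shows "a < b \<Longrightarrow> finite Z \<Longrightarrow> Z \<subseteq> {a<..<b} \<Longrightarrow>
    \<forall>t\<in>{a<..<b}. t \<notin> Z \<longrightarrow> rslope g t = lslope g t \<Longrightarrow>
    (\<Sum>t\<in>Z. rslope g t - lslope g t) = lslope g b - rslope g a"
proof (induction "card Z" arbitrary: Z b rule: less_induct)
  case less
  show ?case
  proof (cases "Z = {}")
    case True
    then show ?thesis using no_break_const[OF good less.prems(1)] less.prems(4) by simp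
  next
    case False
    define z where "z = Max Z"
    have zZ: "z \<in> Z" unfolding z_def using False less.prems(2) by simp
    have zmax: "\<forall>t\<in>Z. t \<le> z" unfolding z_def using less.prems(2) by simp
    define Z' where "Z' = Z - {z}"
    have az: "a < z" "z < b" using zZ less.prems(3) by auto
    have c: "card Z' < card Z" unfolding Z'_def using card_Diff1_less[OF less.prems(2) zZ] .
    have Z'sub: "Z' \<subseteq> {a<..<z}" unfolding Z'_def using less.prems(3) zmax by fastforce
    have Z'nb: "\<forall>t\<in>{a<..<z}. t \<notin> Z' \<longrightarrow> rslope g t = lslope g t"
      using less.prems(4) az unfolding Z'_def by auto
    have IH: "(\<Sum>t\<in>Z'. rslope g t - lslope g t) = lslope g z - rslope g a"
      using less.hyps[OF c az(1) _ Z'sub Z'nb] less.prems(2) unfolding Z'_def by simp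
    have zb: "rslope g z = lslope g b"
    proof (rule no_break_const[OF good az(2)])
      show "\<forall>t\<in>{z<..<b}. rslope g t = lslope g t"
        using less.prems(4) az zmax by force
    qed
    have "(\<Sum>t\<in>Z. rslope g t - lslope g t) = (rslope g z - lslope g z) + (\<Sum>t\<in>Z'. rslope g t - lslope g t)"
      unfolding Z'_def using zZ less.prems(2) by (simp add: sum.remove)
    then show ?thesis using IH zb by simp
  qed
qed



theorem theorem4:
  fixes src tgt :: "'e::finite \<Rightarrow> 'v::finite" and len :: "'e \<Rightarrow> ereal"
    and \<tau> :: "'v \<Rightarrow> 'v" and \<sigma> :: "'e \<Rightarrow> 'e" and fl :: "'e \<Rightarrow> bool"
    and D1 D2 :: "('v, 'e) gpt \<Rightarrow> int" and \<Gamma>' :: "('v, 'e) gpt set"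
  assumes "metric_graph_model src tgt len"
    and "real_structure src tgt len \<tau> \<sigma> fl"
    and "divisor len D1" and "divisor len D2"
    and "real_divisor len \<tau> \<sigma> fl D1" and "real_divisor len \<tau> \<sigma> fl D2"
    and "lin_equiv src tgt len D1 D2"
    and "\<Gamma>' \<in> connected_components_of (subtopology (gtop src tgt len) (real_pts len \<tau> \<sigma> fl))"
  shows "deg_on D1 \<Gamma>' mod 2 = deg_on D2 \<Gamma>' mod 2"
proof -
  note model = assms(1) and rs = assms(2) and dv1 = assms(3) and dv2 = assms(4)
    and rd1 = assms(5) and rd2 = assms(6) and le = assms(7) and comp = assms(8)
  let ?\<iota> = "conj_pt len \<tau> \<sigma> fl"
  have pos: "\<forall>e. 0 < len e" using model unfolding metric_graph_model_def by auto
  obtain f where rf: "rational_fn src tgt len f"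
    and lf: "\<forall>p\<in>gpts len. real_of_int (D2 p - D1 p) = lap src tgt len f p"
    using le unfolding lin_equiv_def by blast
  have lapd: "\<forall>p\<in>gpts len. lap src tgt len f (?\<iota> p) = lap src tgt len f p"
  proof
    fix p :: "('v, 'e) gpt" assume p: "p \<in> gpts len"
    have ip: "?\<iota> p \<in> gpts len" by (rule conj_gpts[OF rs pos p])
    have "D1 (?\<iota> p) = D1 p" "D2 (?\<iota> p) = D2 p"
      using rd1 rd2 p unfolding real_divisor_def by auto
    then show "lap src tgt len f (?\<iota> p) = lap src tgt len f p" using lf p ip by metis
  qed
  have inv: "\<forall>p\<in>gpts len. f (?\<iota> p) = f p" by (rule f_invariant[OF model rs rf lapd])
  have goodf: "\<forall>e. pw_good (efun src tgt len f e)"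
    using rf pos by (auto intro!: rational_good simp: rational_fn_def)
  define g where "g = efun src tgt len f"
  define L where "L e = real_of_ereal (len e)" for e
  have gg: "pw_good (g e)" for e using goodf unfolding g_def by blast
  have ss: "\<sigma> (\<sigma> e) = e" "len (\<sigma> e) = len e" "fl (\<sigma> e) = fl e" "\<tau> (\<tau> v) = v" for e v
    using rs unfolding real_structure_def by auto
  have Ls: "L (\<sigma> e) = L e" for e using ss unfolding L_def by simp
  have eFf: "efun src tgt len (\<lambda>q. f (?\<iota> q)) e = g e" for e
    unfolding g_def efun_def fun_eq_iff by (intro allI) (rule inv[rule_format, OF ep_in])
  have gnf: "\<not> fl e \<Longrightarrow> g (\<sigma> e) = g e" for e
    using efun_conj_nf[OF rs, of e f] eFf unfolding g_def by simp
  have gfl: "fl e \<Longrightarrow> g e = (\<lambda>s. g (\<sigma> e) (L e - s))" for e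
    using efun_conj_fl[OF rs pos, of e f] eFf unfolding g_def L_def by simp
  define r where "r e = rslope (g e) 0" for e
  define l where "l e = - lslope (g e) (L e)" for e
  have rint: "r e \<in> \<int>" "l e \<in> \<int>" for e
    unfolding r_def l_def using good_rgerm[OF gg] good_lgerm[OF gg] by auto
  have r_nf: "\<not> fl e \<Longrightarrow> r (\<sigma> e) = r e \<and> l (\<sigma> e) = l e" for e
    unfolding r_def l_def using gnf Ls by simp
  have r_fl: "fl e \<Longrightarrow> r (\<sigma> e) = l e \<and> l (\<sigma> e) = r e" for e
  proof -
    assume fe: "fl e"
    have "g (\<sigma> e) = (\<lambda>s. g e (L e - s))" using gfl[of "\<sigma> e"] fe ss Ls by simp
    then show ?thesis unfolding r_def l_def using rslope_refl[OF gg] lslope_refl[OF gg] Ls by simp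
  qed
  have Gsub: "\<Gamma>' \<subseteq> real_pts len \<tau> \<sigma> fl"
    using connected_components_of_subset[OF comp] topspace_gtop by auto
  have rsub: "real_pts len \<tau> \<sigma> fl \<subseteq> gpts len" unfolding real_pts_def by blast
  define RE where "RE = {e. \<sigma> e = e \<and> \<not> fl e}"
  define I where "I e = edge_pt src tgt len e ` {0..len e}" for e
  have I_real: "e \<in> RE \<Longrightarrow> I e \<subseteq> real_pts len \<tau> \<sigma> fl" for e
    unfolding I_def real_pts_def RE_def using conj_ep_nf[OF rs] ep_in by auto
  have I_conn: "e \<in> RE \<Longrightarrow> connectedin (subtopology (gtop src tgt len) (real_pts len \<tau> \<sigma> fl)) (I e)" for e
    unfolding connectedin_subtopology
  proof
    show "connectedin (gtop src tgt len) (I e)"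
      unfolding I_def
      by (rule connectedin_continuous_map_image[OF ep_cont]) simp
  qed (rule I_real)
  have I_in: "e \<in> RE \<Longrightarrow> p \<in> I e \<Longrightarrow> p \<in> \<Gamma>' \<Longrightarrow> I e \<subseteq> \<Gamma>'" for e p
    using connected_components_of_maximal[OF comp I_conn] unfolding disjnt_def by blast
  define V\<Gamma> where "V\<Gamma> = {v. Vert v \<in> \<Gamma>'}"
  define R\<Gamma> where "R\<Gamma> = {e \<in> RE. I e \<subseteq> \<Gamma>'}"
  have srcI: "Vert (src e) \<in> I e" for e
  proof -
    have "0 < len e" using pos by blast
    then show ?thesis unfolding I_def by (intro image_eqI[of _ _ 0]) (auto simp: edge_pt_def less_imp_le)
  qed
  have tgtI: "Vert (tgt e) \<in> I e" for e
  proof -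
    have "0 < len e" using pos by blast
    then show ?thesis unfolding I_def by (intro image_eqI[of _ _ "len e"]) (auto simp: edge_pt_def less_imp_le)
  qed
  have src_iff: "e \<in> RE \<Longrightarrow> src e \<in> V\<Gamma> \<longleftrightarrow> e \<in> R\<Gamma>" for e
    unfolding V\<Gamma>_def R\<Gamma>_def using I_in srcI by blast
  have tgt_iff: "e \<in> RE \<Longrightarrow> tgt e \<in> V\<Gamma> \<longleftrightarrow> e \<in> R\<Gamma>" for e
    unfolding V\<Gamma>_def R\<Gamma>_def using I_in tgtI by blast
  have tau_fix: "v \<in> V\<Gamma> \<Longrightarrow> \<tau> v = v" for v
    unfolding V\<Gamma>_def using Gsub unfolding real_pts_def by (auto simp: conj_pt_def)
  have inner_cls: "Inner e t \<in> \<Gamma>' \<Longrightarrow> \<sigma> e = e \<and> (fl e \<longrightarrow> L e - t = t)" for e t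
    using Gsub unfolding real_pts_def L_def by (auto simp: conj_pt_def split: if_splits)

  define U where "U = {p \<in> \<Gamma>'. D1 p \<noteq> 0 \<or> D2 p \<noteq> 0}"
  have Ufin: "finite U"
  proof (rule finite_subset)
    show "U \<subseteq> {p. D1 p \<noteq> 0} \<union> {p. D2 p \<noteq> 0}" unfolding U_def by blast
    show "finite ({p. D1 p \<noteq> 0} \<union> {p. D2 p \<noteq> 0})" using dv1 dv2 unfolding divisor_def by simp
  qed
  have Ug: "U \<subseteq> gpts len" unfolding U_def using Gsub rsub by blast
  have deg1: "deg_on D1 \<Gamma>' = (\<Sum>p\<in>U. D1 p)"
    unfolding deg_on_def by (rule sum.mono_neutral_left[OF Ufin]) (auto simp: U_def)
  have deg2: "deg_on D2 \<Gamma>' = (\<Sum>p\<in>U. D2 p)"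
    unfolding deg_on_def by (rule sum.mono_neutral_left[OF Ufin]) (auto simp: U_def)
  have zero_out: "p \<in> \<Gamma>' \<Longrightarrow> p \<notin> U \<Longrightarrow> lap src tgt len f p = 0" for p
  proof -
    assume "p \<in> \<Gamma>'" "p \<notin> U"
    then have "D1 p = 0" "D2 p = 0" "p \<in> gpts len" unfolding U_def using Gsub rsub by auto
    then show ?thesis using lf by force
  qed
  have lapU: "real_of_int (\<Sum>p\<in>U. D2 p - D1 p) = (\<Sum>p\<in>U. lap src tgt len f p)"
    unfolding of_int_sum using lf Ug by (intro sum.cong) auto
  define UV where "UV = {p\<in>U. \<exists>v. p = Vert v}"
  define UR where "UR = {p\<in>U. \<exists>e t. p = Inner e t \<and> e \<in> RE}"
  define UM where "UM = {p\<in>U. \<exists>e t. p = Inner e t \<and> \<sigma> e = e \<and> fl e}"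
  have Usplit: "U = UV \<union> (UR \<union> UM)"
  proof
    show "U \<subseteq> UV \<union> (UR \<union> UM)"
    proof
      fix p assume p: "p \<in> U"
      show "p \<in> UV \<union> (UR \<union> UM)"
      proof (cases p)
        case (Vert v) then show ?thesis using p unfolding UV_def by blast
      next
        case (Inner e t)
        then have "\<sigma> e = e" using inner_cls p unfolding U_def by blast
        then show ?thesis using p Inner unfolding UR_def UM_def RE_def by blast
      qed
    qed
  qed (auto simp: UV_def UR_def UM_def)
  have d1: "UV \<inter> (UR \<union> UM) = {}" unfolding UV_def UR_def UM_def by auto
  have d2: "UR \<inter> UM = {}" unfolding UR_def UM_def RE_def by auto
  have fins: "finite UV" "finite UR" "finite UM"
    using Ufin unfolding UV_def UR_def UM_def by auto
  have sumU: "(\<Sum>p\<in>U. lap src tgt len f p) = (\<Sum>p\<in>UV. lap src tgt len f p) +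
      ((\<Sum>p\<in>UR. lap src tgt len f p) + (\<Sum>p\<in>UM. lap src tgt len f p))"
    by (subst Usplit) (simp add: sum.union_disjoint fins d1 d2)
  have M: "\<exists>k::int. (\<Sum>p\<in>UM. lap src tgt len f p) = 2 * of_int k"
  proof (rule even_sum[OF fins(3)])
    show "\<forall>p\<in>UM. \<exists>k::int. lap src tgt len f p = 2 * of_int k"
    proof
      fix p assume p: "p \<in> UM"
      then obtain e t where pe: "p = Inner e t" "\<sigma> e = e" "fl e" unfolding UM_def by blast
      have "p \<in> \<Gamma>'" using p unfolding UM_def U_def by blast
      then have mid: "L e - t = t" using inner_cls pe by blast
      have ge: "g e = (\<lambda>s. g e (L e - s))" using gfl[OF pe(3)] pe(2) by simp
      have "lslope (g e) t = lslope (\<lambda>s. g e (L e - s)) t"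
        using arg_cong[OF ge, of "\<lambda>h. lslope h t"] by simp
      also have "\<dots> = - rslope (g e) t" using lslope_refl[OF gg] mid by simp
      finally have ls: "lslope (g e) t = - rslope (g e) t" .
      obtain k :: int where k: "rslope (g e) t = of_int k"
        using good_rgerm[OF gg] by (meson Ints_cases)
      have "lap src tgt len f p = 2 * of_int k"
        unfolding pe lap_def using ls k by (simp add: g_def)
      then show "\<exists>k::int. lap src tgt len f p = 2 * of_int k" by blast
    qed
  qed
  have sumUV: "(\<Sum>p\<in>UV. lap src tgt len f p) = (\<Sum>v\<in>V\<Gamma>. lap src tgt len f (Vert v))"
  proof -
    have "(\<Sum>p\<in>UV. lap src tgt len f p) = (\<Sum>p\<in>Vert ` V\<Gamma>. lap src tgt len f p)"
    proof (rule sum.mono_neutral_left)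
      show "finite (Vert ` V\<Gamma>)" by simp
      show "UV \<subseteq> Vert ` V\<Gamma>" unfolding UV_def U_def V\<Gamma>_def by auto
      show "\<forall>p\<in>Vert ` V\<Gamma> - UV. lap src tgt len f p = 0"
        using zero_out unfolding UV_def V\<Gamma>_def by auto
    qed
    also have "\<dots> = (\<Sum>v\<in>V\<Gamma>. lap src tgt len f (Vert v))"
      by (simp add: sum.reindex inj_on_def)
    finally show ?thesis .
  qed
  define T where "T v e = (if src e = v then r e else 0) + (if tgt e = v \<and> len e \<noteq> \<infinity> then l e else 0)" for v e
  have lapV: "lap src tgt len f (Vert v) = (\<Sum>e\<in>UNIV. T v e)" for v
    unfolding lap_def T_def r_def l_def g_def L_def by (simp add: sum_filter_UNIV sum.distrib)
  have Tint: "T v e \<in> \<int>" for v e unfolding T_def using rint by auto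
  have Tsig: "\<tau> v = v \<Longrightarrow> T v (\<sigma> e) = T v e" for v e
  proof -
    assume tv: "\<tau> v = v"
    show ?thesis
    proof (cases "fl e")
      case True
      have a: "src (\<sigma> e) = \<tau> (tgt e)" "tgt (\<sigma> e) = \<tau> (src e)" "len e \<noteq> \<infinity>"
        using rs True unfolding real_structure_def by auto
      have b: "\<tau> x = v \<longleftrightarrow> x = v" for x using tv ss(4) by metis
      show ?thesis unfolding T_def a b using r_fl[OF True] ss(2) a(3) by simp
    next
      case False
      have a: "src (\<sigma> e) = \<tau> (src e)" "tgt (\<sigma> e) = \<tau> (tgt e)"
        using rs False unfolding real_structure_def by auto
      have b: "\<tau> x = v \<longleftrightarrow> x = v" for x using tv ss(4) by metis
      show ?thesis unfolding T_def a b using r_nf[OF False] ss(2) by simp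
    qed
  qed
  define FF where "FF = {e. \<sigma> e = e \<and> fl e}"
  have vpar: "\<tau> v = v \<Longrightarrow> \<exists>k::int. lap src tgt len f (Vert v) = (\<Sum>e\<in>RE. T v e) + 2 * of_int k" for v
  proof -
    assume tv: "\<tau> v = v"
    obtain k1 :: int where k1: "(\<Sum>e\<in>UNIV. T v e) = (\<Sum>e\<in>{e\<in>UNIV. \<sigma> e = e}. T v e) + 2 * of_int k1"
    proof -
      have "\<exists>k::int. (\<Sum>e\<in>UNIV. T v e) = (\<Sum>e\<in>{e\<in>UNIV. \<sigma> e = e}. T v e) + 2 * of_int k"
        by (rule invol_parity) (simp_all add: ss(1) Tsig[OF tv] Tint)
      then show ?thesis using that by blast
    qed
    have fixs: "{e\<in>UNIV. \<sigma> e = e} = RE \<union> FF" unfolding RE_def FF_def by auto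
    have "(\<Sum>e\<in>{e\<in>UNIV. \<sigma> e = e}. T v e) = (\<Sum>e\<in>RE. T v e) + (\<Sum>e\<in>FF. T v e)"
      unfolding fixs by (rule sum.union_disjoint) (auto simp: RE_def FF_def)
    moreover obtain k2 :: int where k2: "(\<Sum>e\<in>FF. T v e) = 2 * of_int k2"
    proof -
      have "\<exists>k::int. (\<Sum>e\<in>FF. T v e) = 2 * of_int k"
      proof (rule even_sum)
      show "finite FF" by simp
      show "\<forall>e\<in>FF. \<exists>k::int. T v e = 2 * of_int k"
      proof
        fix e assume e: "e \<in> FF"
        then have fe: "fl e" and se: "\<sigma> e = e" unfolding FF_def by auto
        have a0: "src (\<sigma> e) = \<tau> (tgt e)" "len e \<noteq> \<infinity>"
          using rs fe unfolding real_structure_def by auto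
        have a: "src e = \<tau> (tgt e)" "len e \<noteq> \<infinity>" using a0 se by auto
        have st1: "tgt e = v \<Longrightarrow> src e = v" using a(1) tv by simp
        have st2: "tgt e = v" if sv: "src e = v"
        proof -
          have "\<tau> (tgt e) = v" using a(1) sv by simp
          then have "\<tau> (\<tau> (tgt e)) = \<tau> v" by simp
          then show ?thesis using ss(4)[of "tgt e"] tv by simp
        qed
        have "r (\<sigma> e) = l e" using r_fl[OF fe] by blast
        then have rl: "r e = l e" using se by simp
        obtain k :: int where k: "r e = of_int k" using rint(1)[of e] by (auto elim: Ints_cases)
        show "\<exists>k::int. T v e = 2 * of_int k"
        proof (cases "src e = v")
          case True
          then have "T v e = r e + l e" unfolding T_def using st2 a(2) by simp
          also have "\<dots> = 2 * of_int k" using rl k by simp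
          finally show ?thesis by blast
        next
          case False
          then have "T v e = 0" unfolding T_def using st1 by auto
          then show ?thesis by (intro exI[of _ 0]) simp
        qed
      qed
      qed
      then show ?thesis using that by blast
    qed
    ultimately have "lap src tgt len f (Vert v) = (\<Sum>e\<in>RE. T v e) + 2 * of_int (k1 + k2)"
      using k1 lapV[of v] by (simp add: algebra_simps)
    then show ?thesis by blast
  qed
  have VK: "\<exists>K::int. (\<Sum>v\<in>V\<Gamma>. lap src tgt len f (Vert v)) = (\<Sum>v\<in>V\<Gamma>. \<Sum>e\<in>RE. T v e) + 2 * of_int K"
  proof -
    have "\<exists>K::int. (\<Sum>v\<in>V\<Gamma>. lap src tgt len f (Vert v) - (\<Sum>e\<in>RE. T v e)) = 2 * of_int K"
    proof (rule even_sum)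
      show "finite V\<Gamma>" by simp
      show "\<forall>v\<in>V\<Gamma>. \<exists>k::int. lap src tgt len f (Vert v) - (\<Sum>e\<in>RE. T v e) = 2 * of_int k"
      proof
        fix v assume "v \<in> V\<Gamma>"
        then obtain k :: int where "lap src tgt len f (Vert v) = (\<Sum>e\<in>RE. T v e) + 2 * of_int k"
          using vpar tau_fix by blast
        then show "\<exists>k::int. lap src tgt len f (Vert v) - (\<Sum>e\<in>RE. T v e) = 2 * of_int k" by auto
      qed
    qed
    then obtain K :: int where "(\<Sum>v\<in>V\<Gamma>. lap src tgt len f (Vert v)) - (\<Sum>v\<in>V\<Gamma>. \<Sum>e\<in>RE. T v e) = 2 * of_int K"
      by (auto simp: sum_subtractf)
    then show ?thesis by (intro exI[of _ K]) simp
  qed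
  define X where "X e = r e + (if len e \<noteq> \<infinity> then l e else 0)" for e
  have swap: "(\<Sum>v\<in>V\<Gamma>. \<Sum>e\<in>RE. T v e) = (\<Sum>e\<in>R\<Gamma>. X e)"
  proof -
    have "(\<Sum>v\<in>V\<Gamma>. \<Sum>e\<in>RE. T v e) = (\<Sum>e\<in>RE. \<Sum>v\<in>V\<Gamma>. T v e)" by (rule sum.swap)
    also have "\<dots> = (\<Sum>e\<in>RE. if e \<in> R\<Gamma> then X e else 0)"
    proof (rule sum.cong[OF refl])
      fix e assume e: "e \<in> RE"
      have "(\<Sum>v\<in>V\<Gamma>. T v e) = (if src e \<in> V\<Gamma> then r e else 0) + (if tgt e \<in> V\<Gamma> \<and> len e \<noteq> \<infinity> then l e else 0)"
        by (cases "len e = \<infinity>") (simp_all add: T_def sum.distrib sum.delta')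
      then show "(\<Sum>v\<in>V\<Gamma>. T v e) = (if e \<in> R\<Gamma> then X e else 0)"
        using src_iff[OF e] tgt_iff[OF e] unfolding X_def by simp
    qed
    also have "\<dots> = (\<Sum>e\<in>RE \<inter> R\<Gamma>. X e)"
      by (rule sum.inter_restrict[symmetric]) simp
    also have "\<dots> = (\<Sum>e\<in>R\<Gamma>. X e)"
    proof -
      have "RE \<inter> R\<Gamma> = R\<Gamma>" unfolding R\<Gamma>_def by blast
      then show ?thesis by (simp only:)
    qed
    finally show ?thesis .
  qed
  define Z where "Z e = Inner e -` U" for e
  have Zfin: "finite (Z e)" for e unfolding Z_def by (rule finite_vimageI[OF Ufin]) (simp add: inj_def)
  have gI: "Inner e t \<in> gpts len \<Longrightarrow> 0 < t \<and> ereal t < len e" for e t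
    unfolding gpts_def by auto
  have epI: "0 < t \<Longrightarrow> ereal t < len e \<Longrightarrow> Inner e t \<in> I e" for e t
    unfolding I_def by (rule image_eqI[of _ _ "ereal t"]) (auto simp: edge_pt_def)
  have URimg: "UR = (\<lambda>(e,t). Inner e t) ` (SIGMA e:R\<Gamma>. Z e)"
  proof
    show "UR \<subseteq> (\<lambda>(e,t). Inner e t) ` (SIGMA e:R\<Gamma>. Z e)"
    proof
      fix p assume p: "p \<in> UR"
      then obtain e t where pe: "p = Inner e t" "e \<in> RE" "p \<in> U" unfolding UR_def by blast
      then have "0 < t \<and> ereal t < len e" using gI Ug by blast
      then have "p \<in> I e" using epI pe by blast
      moreover have "p \<in> \<Gamma>'" using pe unfolding U_def by blast
      ultimately have "e \<in> R\<Gamma>" using I_in pe unfolding R\<Gamma>_def by blast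
      then show "p \<in> (\<lambda>(e,t). Inner e t) ` (SIGMA e:R\<Gamma>. Z e)"
        using pe unfolding Z_def by force
    qed
    show "(\<lambda>(e,t). Inner e t) ` (SIGMA e:R\<Gamma>. Z e) \<subseteq> UR"
      unfolding UR_def Z_def R\<Gamma>_def by auto
  qed
  have edge_sum: "(\<Sum>t\<in>Z e. lap src tgt len f (Inner e t)) = - X e" if e: "e \<in> R\<Gamma>" for e
  proof -
    have IeG: "I e \<subseteq> \<Gamma>'" using e unfolding R\<Gamma>_def by blast
    have lapI: "lap src tgt len f (Inner e t) = rslope (g e) t - lslope (g e) t" for t
      unfolding lap_def g_def by simp
    have Zsub: "t \<in> Z e \<Longrightarrow> 0 < t \<and> ereal t < len e" for t
      unfolding Z_def using gI Ug by blast
    have nb: "0 < t \<Longrightarrow> ereal t < len e \<Longrightarrow> t \<notin> Z e \<Longrightarrow> rslope (g e) t = lslope (g e) t" for t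
    proof -
      assume t: "0 < t" "ereal t < len e" "t \<notin> Z e"
      have "Inner e t \<in> \<Gamma>'" using epI[OF t(1,2)] IeG by blast
      moreover have "Inner e t \<notin> U" using t(3) unfolding Z_def by simp
      ultimately have "lap src tgt len f (Inner e t) = 0" by (rule zero_out)
      then show ?thesis using lapI by simp
    qed
    show ?thesis
    proof (cases "len e = \<infinity>")
      case False
      have "0 < len e" using pos by blast
      then obtain Lv where Lv: "len e = ereal Lv" "0 < Lv" using False by (cases "len e") auto
      have "(\<Sum>t\<in>Z e. rslope (g e) t - lslope (g e) t) = lslope (g e) Lv - rslope (g e) 0"
      proof (rule telescope[OF gg Lv(2) Zfin])
        show "Z e \<subseteq> {0<..<Lv}" using Zsub Lv by fastforce
        show "\<forall>t\<in>{0<..<Lv}. t \<notin> Z e \<longrightarrow> rslope (g e) t = lslope (g e) t"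
          using nb Lv by auto
      qed
      then show ?thesis using Lv False unfolding lapI X_def r_def l_def L_def by simp
    next
      case True
      obtain a where a: "\<forall>s\<ge>a. g e s = f (Vert (tgt e))"
        using rational_tail[OF rf True] unfolding g_def by blast
      define b where "b = max (\<bar>a\<bar> + 1) (Max (insert 0 (Z e)) + 1)"
      have b0: "0 < b" unfolding b_def by simp
      have Zb: "t \<in> Z e \<Longrightarrow> t < b" for t
      proof -
        assume "t \<in> Z e"
        then have "t \<le> Max (insert 0 (Z e))" using Zfin by simp
        then show "t < b" unfolding b_def by simp
      qed
      have "(\<Sum>t\<in>Z e. rslope (g e) t - lslope (g e) t) = lslope (g e) b - rslope (g e) 0"
      proof (rule telescope[OF gg b0 Zfin])
        show "Z e \<subseteq> {0<..<b}" using Zsub Zb by fastforce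
        show "\<forall>t\<in>{0<..<b}. t \<notin> Z e \<longrightarrow> rslope (g e) t = lslope (g e) t"
          using nb True by auto
      qed
      moreover have "lslope (g e) b = 0"
        by (rule lslope_aff[where \<delta>=1 and c="f (Vert (tgt e))"]) (use a in \<open>auto simp: b_def\<close>)
      ultimately show ?thesis using True unfolding lapI X_def r_def by simp
    qed
  qed
  have sumUR: "(\<Sum>p\<in>UR. lap src tgt len f p) = - (\<Sum>e\<in>R\<Gamma>. X e)"
  proof -
    have "(\<Sum>p\<in>UR. lap src tgt len f p) = (\<Sum>(e,t)\<in>(SIGMA e:R\<Gamma>. Z e). lap src tgt len f (Inner e t))"
      unfolding URimg by (subst sum.reindex) (auto simp: inj_on_def case_prod_beta)
    also have "\<dots> = (\<Sum>e\<in>R\<Gamma>. \<Sum>t\<in>Z e. lap src tgt len f (Inner e t))"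
      by (rule sum.Sigma[symmetric]) (simp_all add: Zfin)
    also have "\<dots> = (\<Sum>e\<in>R\<Gamma>. - X e)" using edge_sum by simp
    finally show ?thesis by (simp add: sum_negf)
  qed
  obtain K :: int where K: "(\<Sum>v\<in>V\<Gamma>. lap src tgt len f (Vert v)) = (\<Sum>v\<in>V\<Gamma>. \<Sum>e\<in>RE. T v e) + 2 * of_int K"
    using VK by blast
  obtain kM :: int where kM: "(\<Sum>p\<in>UM. lap src tgt len f p) = 2 * of_int kM" using M by blast
  have "real_of_int (\<Sum>p\<in>U. D2 p - D1 p) = real_of_int (2 * (K + kM))"
    unfolding lapU sumU sumUV K swap sumUR kM by simp
  then have "(\<Sum>p\<in>U. D2 p - D1 p) = 2 * (K + kM)" by (simp only: of_int_eq_iff)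
  then have "deg_on D2 \<Gamma>' = deg_on D1 \<Gamma>' + 2 * (K + kM)"
    unfolding deg1 deg2 by (simp add: sum_subtractf)
  then show ?thesis by presburger
qed


end
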